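(* For bipartite matching prophet secretary (defined in context) there exist fixed prices $\tau_1,\dots,\tau_m\ge0$ (with tie probabilities $\theta_1,\dots,\theta_m\in[0,1]$) such that the following randomized recommendation algorithm has expected welfare at least $(1-1/e)\,\mathbb{E}[\mathrm{OPT}(\mathbf v)]$: when buyer $i$ arrives with value vector $v_i$, compute $p_k(v_i)=\Pr_{\mathbf v_{-i}}[(i,k)\in\mathcal M(v_i,\mathbf v_{-i})]$ for each item $k$; select a candidate item $k$ with probability $p_k(v_i)$ (and no candidate with probability $1-\sum_kp_k(v_i)$) using independent randomness; if a candidate $k$ is selected and still unsold, offer it at price $\tau_k$, and the buyer buys it if $v_{ik}>\tau_k$, or if $v_{ik}=\tau_k$ with independent probability $\theta_k$.
   Context: Setting: $n$ unit-demand buyers and $m$ items; buyer $i$ has a random nonnegative value vector $v_i=(v_{ik})_k$, independent across buyers, and arrives at an independent uniform time $T_i\in[0,1]$. $\mathcal M(\mathbf v)$ denotes a maximum-weight matching for weights $v_{ik}$, chosen by a fixed deterministic rule, and $\mathrm{OPT}(\mathbf v)$ its weight. Welfare is the sum over buyers of $v_{ik}$ for the item $k$ each buys. *)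

theory Defs
  imports "HOL-Probability.Probability"
begin

text \<open>Buyers are 0..<n, items are 0..<m. A value profile is V :: nat => nat => real,
  where V i k is buyer i's value for item k.\<close>

definition is_matching :: "nat \<Rightarrow> nat \<Rightarrow> (nat \<times> nat) set \<Rightarrow> bool" where
  "is_matching n m A \<longleftrightarrow> A \<subseteq> {..<n} \<times> {..<m} \<and>
     (\<forall>(i,k)\<in>A. \<forall>(i',k')\<in>A. (i = i' \<longleftrightarrow> k = k'))"

definition match_weight :: "(nat \<Rightarrow> nat \<Rightarrow> real) \<Rightarrow> (nat \<times> nat) set \<Rightarrow> real" where
  "match_weight V A = (\<Sum>(i,k)\<in>A. V i k)"

definition is_max_weight_matching ::
  "nat \<Rightarrow> nat \<Rightarrow> (nat \<Rightarrow> nat \<Rightarrow> real) \<Rightarrow> (nat \<times> nat) set \<Rightarrow> bool" where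
  "is_max_weight_matching n m V A \<longleftrightarrow> is_matching n m A \<and>
     (\<forall>B. is_matching n m B \<longrightarrow> match_weight V B \<le> match_weight V A)"

definition value_space :: "nat \<Rightarrow> (nat \<Rightarrow> real) measure" where
  "value_space m = (\<Pi>\<^sub>M k\<in>{..<m}. borel)"

definition profile_space :: "nat \<Rightarrow> nat \<Rightarrow> (nat \<Rightarrow> nat \<Rightarrow> real) measure" where
  "profile_space n m = (\<Pi>\<^sub>M i\<in>{..<n}. value_space m)"

definition OPT :: "((nat \<Rightarrow> nat \<Rightarrow> real) \<Rightarrow> (nat \<times> nat) set) \<Rightarrow> (nat \<Rightarrow> nat \<Rightarrow> real) \<Rightarrow> real" where
  "OPT M V = match_weight V (M V)"

definition rec_prob ::
  "nat \<Rightarrow> (nat \<Rightarrow> (nat \<Rightarrow> real) measure) \<Rightarrow> ((nat \<Rightarrow> nat \<Rightarrow> real) \<Rightarrow> (nat \<times> nat) set)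
     \<Rightarrow> nat \<Rightarrow> (nat \<Rightarrow> real) \<Rightarrow> nat \<Rightarrow> real" where
  "rec_prob n D M i x k =
     measure (\<Pi>\<^sub>M j\<in>{..<n}. D j) {V \<in> space (\<Pi>\<^sub>M j\<in>{..<n}. D j). (i,k) \<in> M (V(i := x))}"

text \<open>Candidate selection from a uniform u in [0,1]: item k is selected iff
  sum_{j<k} q j <= u < sum_{j<=k} q j, so with probability q k; no candidate otherwise.\<close>
definition select_cand :: "nat \<Rightarrow> (nat \<Rightarrow> real) \<Rightarrow> real \<Rightarrow> nat option" where
  "select_cand m q u =
     (if \<exists>k<m. sum q {..<k} \<le> u \<and> u < sum q {..<Suc k}
      then Some (LEAST k. k < m \<and> sum q {..<k} \<le> u \<and> u < sum q {..<Suc k})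
      else None)"

text \<open>One buyer's step, given the set S of sold items and current welfare w.
  c = candidate item, t = the buyer's tie coin (uniform in [0,1]; tie broken in favour
  of buying iff t < theta k, i.e. with probability theta k).\<close>
definition buyer_step ::
  "(nat \<Rightarrow> real) \<Rightarrow> (nat \<Rightarrow> real) \<Rightarrow> (nat \<Rightarrow> real) \<Rightarrow> nat option \<Rightarrow> real
     \<Rightarrow> nat set \<times> real \<Rightarrow> nat set \<times> real" where
  "buyer_step \<tau> \<theta> x c t Sw =
     (case c of None \<Rightarrow> Sw
      | Some k \<Rightarrow>
          (if k \<notin> fst Sw \<and> (x k > \<tau> k \<or> (x k = \<tau> k \<and> t < \<theta> k))
           then (insert k (fst Sw), snd Sw + x k) else Sw))"

text \<open>Welfare of the recommendation algorithm for value profile V, arrival times T,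
  candidate-selection randomness U, and tie-breaking randomness W.
  Buyers are processed in increasing order of arrival time (ties, a null event,
  broken by index via the stable sort).\<close>
definition alg_welfare ::
  "nat \<Rightarrow> nat \<Rightarrow> (nat \<Rightarrow> (nat \<Rightarrow> real) measure) \<Rightarrow> ((nat \<Rightarrow> nat \<Rightarrow> real) \<Rightarrow> (nat \<times> nat) set)
     \<Rightarrow> (nat \<Rightarrow> real) \<Rightarrow> (nat \<Rightarrow> real)
     \<Rightarrow> (nat \<Rightarrow> nat \<Rightarrow> real) \<Rightarrow> (nat \<Rightarrow> real) \<Rightarrow> (nat \<Rightarrow> real) \<Rightarrow> (nat \<Rightarrow> real) \<Rightarrow> real" where
  "alg_welfare n m D M \<tau> \<theta> V T U W =
     snd (fold (\<lambda>i. buyer_step \<tau> \<theta> (V i)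
                     (select_cand m (rec_prob n D M i (V i)) (U i)) (W i))
               (sort_key T [0..<n]) ({}, 0))"

definition unif01 :: "real measure" where
  "unif01 = uniform_measure lborel {0..1}"

definition unif_vec :: "nat \<Rightarrow> (nat \<Rightarrow> real) measure" where
  "unif_vec n = (\<Pi>\<^sub>M i\<in>{..<n}. unif01)"

end

theory Submission
  imports Defs
begin

lemma ennreal_div1[simp]: "(x::ennreal) / 1 = x" by (simp add: divide_ennreal_def)

lemma unif01_prob: "prob_space unif01"
  unfolding unif01_def by (rule prob_space_uniform_measure) auto

lemma space_unif01[simp]: "space unif01 = UNIV"
  unfolding unif01_def by simp

lemma sets_unif01[simp, measurable_cong]: "sets unif01 = sets borel"
  unfolding unif01_def by simp

lemma emeasure_unif01_Ico:
  assumes "0 \<le> a" "a \<le> b" "b \<le> 1"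
  shows "emeasure unif01 {a..<b} = ennreal (b - a)"
proof -
  have "{0..1} \<inter> {a..<b} = {a..<b}" using assms by auto
  then show ?thesis using assms unfolding unif01_def
    by (subst emeasure_uniform_measure) auto
qed

lemma emeasure_unif01_less:
  assumes "0 \<le> a" "a \<le> 1"
  shows "emeasure unif01 {w. w < a} = ennreal a"
proof -
  have "{0..1} \<inter> {w. w < a} = {0..<a}" using assms by auto
  then show ?thesis using assms unfolding unif01_def
    by (subst emeasure_uniform_measure) auto
qed

lemma emeasure_unif01_le:
  assumes "0 \<le> a" "a \<le> 1"
  shows "emeasure unif01 {w. w \<le> a} = ennreal a"
proof -
  have "{0..1} \<inter> {w. w \<le> a} = {0..a}" using assms by auto
  then show ?thesis using assms unfolding unif01_def
    by (subst emeasure_uniform_measure) auto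
qed


lemma (in prob_space) nn_integral_if_set:
  assumes A: "A \<in> sets M" and "0 \<le> x" "0 \<le> y"
  shows "(\<integral>\<^sup>+u. ennreal (if u \<in> A then x else y) \<partial>M) = ennreal (prob A * x + (1 - prob A) * y)"
proof -
  have "(\<integral>\<^sup>+u. ennreal (if u \<in> A then x else y) \<partial>M)
      = (\<integral>\<^sup>+u. ennreal x * indicator A u + ennreal y * indicator (space M - A) u \<partial>M)"
    by (rule nn_integral_cong) (auto split: split_indicator)
  also have "\<dots> = ennreal x * emeasure M A + ennreal y * emeasure M (space M - A)"
    using A by (subst nn_integral_add) (auto simp: nn_integral_cmult)
  also have "\<dots> = ennreal (prob A * x + (1 - prob A) * y)"
    using A assms by (simp add: emeasure_eq_measure prob_compl ennreal_mult'[symmetric]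
        ennreal_plus[symmetric] mult.commute del: ennreal_plus)
  finally show ?thesis .
qed

lemma product_prob_space_ext:
  assumes "\<And>j. j \<in> I \<Longrightarrow> prob_space (N j)"
  shows "product_prob_space (\<lambda>j. if j \<in> I then N j else count_space {undefined})"
proof (rule product_prob_spaceI)
  fix j show "prob_space (if j \<in> I then N j else count_space {undefined})"
    using assms by (cases "j \<in> I") (auto intro!: prob_spaceI)
qed

lemma PiM_ext: "PiM I (\<lambda>j. if j \<in> I then N j else count_space {undefined}) = PiM I N"
  by (rule PiM_cong) auto

lemma nn_integral_PiM_prod:
  assumes P: "\<And>j. j \<in> I \<Longrightarrow> prob_space (N j)" and fin: "finite I"
    and meas: "\<And>j. j \<in> I \<Longrightarrow> g j \<in> borel_measurable (N j)"
  shows "(\<integral>\<^sup>+x. (\<Prod>j\<in>I. g j (x j)) \<partial>PiM I N) = (\<Prod>j\<in>I. \<integral>\<^sup>+x. g j x \<partial>N j)"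
proof -
  let ?N = "\<lambda>j. if j \<in> I then N j else count_space {undefined}"
  interpret product_prob_space ?N I by (rule product_prob_space_ext[OF P])
  have "(\<integral>\<^sup>+x. (\<Prod>j\<in>I. g j (x j)) \<partial>PiM I ?N) = (\<Prod>j\<in>I. \<integral>\<^sup>+x. g j x \<partial>?N j)"
    by (rule product_nn_integral_prod[OF fin]) (use meas in auto)
  then show ?thesis by (simp add: PiM_ext)
qed

lemma nn_integral_PiM_prod_real:
  assumes P: "\<And>j. j \<in> I \<Longrightarrow> prob_space (N j)" and fin: "finite I"
    and meas: "\<And>j. j \<in> I \<Longrightarrow> g j \<in> borel_measurable (N j)"
    and nn: "\<And>j x. j \<in> I \<Longrightarrow> 0 \<le> g j x"
    and r: "\<And>j. j \<in> I \<Longrightarrow> (\<integral>\<^sup>+x. ennreal (g j x) \<partial>N j) = ennreal (r j)"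
    and rnn: "\<And>j. j \<in> I \<Longrightarrow> 0 \<le> r j"
  shows "(\<integral>\<^sup>+x. ennreal (\<Prod>j\<in>I. g j (x j)) \<partial>PiM I N) = ennreal (\<Prod>j\<in>I. r j)"
proof -
  have "(\<integral>\<^sup>+x. ennreal (\<Prod>j\<in>I. g j (x j)) \<partial>PiM I N) = (\<integral>\<^sup>+x. (\<Prod>j\<in>I. ennreal (g j (x j))) \<partial>PiM I N)"
    by (rule nn_integral_cong) (simp add: prod_ennreal nn)
  also have "\<dots> = (\<Prod>j\<in>I. \<integral>\<^sup>+x. ennreal (g j x) \<partial>N j)"
    by (rule nn_integral_PiM_prod[OF P fin]) (use meas in auto)
  also have "\<dots> = (\<Prod>j\<in>I. ennreal (r j))" by (rule prod.cong) (auto simp: r)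
  also have "\<dots> = ennreal (\<Prod>j\<in>I. r j)" by (simp add: prod_ennreal rnn)
  finally show ?thesis .
qed

lemma nn_integral_PiM_one_minus_prod:
  assumes P: "\<And>j. j \<in> I \<Longrightarrow> prob_space (N j)" and fin: "finite I"
    and meas: "\<And>j. j \<in> I \<Longrightarrow> g j \<in> borel_measurable (N j)"
    and nn: "\<And>j x. j \<in> I \<Longrightarrow> 0 \<le> g j x" and le1: "\<And>j x. j \<in> I \<Longrightarrow> g j x \<le> 1"
    and r: "\<And>j. j \<in> I \<Longrightarrow> (\<integral>\<^sup>+x. ennreal (g j x) \<partial>N j) = ennreal (r j)"
    and rnn: "\<And>j. j \<in> I \<Longrightarrow> 0 \<le> r j" and rle: "\<And>j. j \<in> I \<Longrightarrow> r j \<le> 1"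
  shows "(\<integral>\<^sup>+x. ennreal (1 - (\<Prod>j\<in>I. g j (x j))) \<partial>PiM I N) = ennreal (1 - (\<Prod>j\<in>I. r j))"
proof -
  interpret PP: prob_space "PiM I N" by (rule prob_space_PiM[OF P])
  have pm: "(\<lambda>x. \<Prod>j\<in>I. g j (x j)) \<in> borel_measurable (PiM I N)"
  proof (intro borel_measurable_prod)
    fix j assume j: "j \<in> I"
    show "(\<lambda>x. g j (x j)) \<in> borel_measurable (PiM I N)"
      using measurable_comp[OF measurable_component_singleton[of j I N, OF j] meas[OF j]] by (simp add: comp_def)
  qed
  have le: "(\<Prod>j\<in>I. g j (x j)) \<le> 1" for x
    by (rule prod_le_1) (auto simp: nn le1)
  have "(\<integral>\<^sup>+x. ennreal (1 - (\<Prod>j\<in>I. g j (x j))) \<partial>PiM I N) + (\<integral>\<^sup>+x. ennreal (\<Prod>j\<in>I. g j (x j)) \<partial>PiM I N)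
     = (\<integral>\<^sup>+x. ennreal (1 - (\<Prod>j\<in>I. g j (x j))) + ennreal (\<Prod>j\<in>I. g j (x j)) \<partial>PiM I N)"
    using pm by (subst nn_integral_add) auto
  also have "\<dots> = (\<integral>\<^sup>+x. 1 \<partial>PiM I N)"
    by (rule nn_integral_cong) (simp add: ennreal_plus[symmetric] prod_nonneg nn le del: ennreal_plus)
  also have "\<dots> = 1" by (simp add: PP.emeasure_space_1)
  finally have eq: "(\<integral>\<^sup>+x. ennreal (1 - (\<Prod>j\<in>I. g j (x j))) \<partial>PiM I N) + ennreal (\<Prod>j\<in>I. r j) = 1"
    by (simp add: nn_integral_PiM_prod_real[OF P fin meas nn r rnn])
  have rle1: "(\<Prod>j\<in>I. r j) \<le> 1" by (rule prod_le_1) (auto simp: rnn rle)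
  from eq have "(\<integral>\<^sup>+x. ennreal (1 - (\<Prod>j\<in>I. g j (x j))) \<partial>PiM I N) = 1 - ennreal (\<Prod>j\<in>I. r j)"
  proof -
    have "(\<integral>\<^sup>+x. ennreal (1 - (\<Prod>j\<in>I. g j (x j))) \<partial>PiM I N)
      = ((\<integral>\<^sup>+x. ennreal (1 - (\<Prod>j\<in>I. g j (x j))) \<partial>PiM I N) + ennreal (\<Prod>j\<in>I. r j)) - ennreal (\<Prod>j\<in>I. r j)"
      by (rule ennreal_add_diff_cancel_right[symmetric]) simp
    then show ?thesis using eq by simp
  qed
  also have "\<dots> = ennreal (1 - (\<Prod>j\<in>I. r j))"
    using ennreal_minus[of "\<Prod>j\<in>I. r j" 1] by (simp add: prod_nonneg rnn)
  finally show ?thesis .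
qed


lemma select_cand_Some:
  assumes nn: "\<And>j. 0 \<le> q j"
  shows "select_cand m q u = Some k \<longleftrightarrow> k < m \<and> sum q {..<k} \<le> u \<and> u < sum q {..<Suc k}"
proof -
  have uniq: "k1 = k2" if "sum q {..<k1} \<le> u" "u < sum q {..<Suc k1}"
      "sum q {..<k2} \<le> u" "u < sum q {..<Suc k2}" for k1 k2
  proof (rule ccontr)
    assume "k1 \<noteq> k2"
    then consider "k1 < k2" | "k2 < k1" by linarith
    then show False
    proof cases
      case 1
      then have "sum q {..<Suc k1} \<le> sum q {..<k2}" by (intro sum_mono2) (auto simp: nn)
      then show False using that by linarith
    next
      case 2
      then have "sum q {..<Suc k2} \<le> sum q {..<k1}" by (intro sum_mono2) (auto simp: nn)
      then show False using that by linarith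
    qed
  qed
  show ?thesis
  proof
    assume "select_cand m q u = Some k"
    then have ex: "\<exists>k<m. sum q {..<k} \<le> u \<and> u < sum q {..<Suc k}"
      and kk: "k = (LEAST k. k < m \<and> sum q {..<k} \<le> u \<and> u < sum q {..<Suc k})"
      unfolding select_cand_def by (auto split: if_splits)
    from ex obtain k0 where "k0 < m \<and> sum q {..<k0} \<le> u \<and> u < sum q {..<Suc k0}" by blast
    then show "k < m \<and> sum q {..<k} \<le> u \<and> u < sum q {..<Suc k}"
      unfolding kk by (rule LeastI)
  next
    assume h: "k < m \<and> sum q {..<k} \<le> u \<and> u < sum q {..<Suc k}"
    have "(LEAST k. k < m \<and> sum q {..<k} \<le> u \<and> u < sum q {..<Suc k}) = k"
    proof (rule Least_equality)
      show "k < m \<and> sum q {..<k} \<le> u \<and> u < sum q {..<Suc k}" by (rule h)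
    next
      fix y assume "y < m \<and> sum q {..<y} \<le> u \<and> u < sum q {..<Suc y}"
      then have "k = y" using h uniq by blast
      then show "k \<le> y" by simp
    qed
    then show "select_cand m q u = Some k" using h unfolding select_cand_def by auto
  qed
qed

lemma select_cand_lt:
  assumes "select_cand m q u = Some k" shows "k < m"
proof -
  let ?P = "\<lambda>k. k < m \<and> sum q {..<k} \<le> u \<and> u < sum q {..<Suc k}"
  from assms have ex: "\<exists>k. ?P k" and kk: "k = (LEAST k. ?P k)"
    unfolding select_cand_def by (auto split: if_splits)
  from LeastI_ex[OF ex] show ?thesis unfolding kk[symmetric] by simp
qed

lemma emeasure_select_cand:
  assumes nn: "\<And>j. 0 \<le> q j" and s1: "sum q {..<m} \<le> 1" and k: "k < m"
  shows "emeasure unif01 {u. select_cand m q u = Some k} = ennreal (q k)"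
proof -
  have eq: "{u. select_cand m q u = Some k} = {sum q {..<k}..<sum q {..<Suc k}}"
    using k by (auto simp: select_cand_Some[OF nn])
  have "sum q {..<Suc k} \<le> sum q {..<m}" using k by (intro sum_mono2) (auto simp: nn)
  then show ?thesis unfolding eq
    using s1 by (subst emeasure_unif01_Ico) (auto intro: sum_nonneg nn)
qed

lemma select_cand_sets: "{u. select_cand m q u = Some k} \<in> sets unif01"
proof -
  have "{u. select_cand m q u = Some k} = (\<Union>k'\<in>{k'. k' < m \<and> k' = k}. {u. select_cand m q u = Some k})" 
    by (auto dest: select_cand_lt)
  show ?thesis
    unfolding select_cand_def by (simp add: pred_def[symmetric]) measurable
qed


locale S6 =
  fixes n m :: nat
    and D :: "nat \<Rightarrow> (nat \<Rightarrow> real) measure"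
    and M :: "(nat \<Rightarrow> nat \<Rightarrow> real) \<Rightarrow> (nat \<times> nat) set"
  assumes D_prob: "\<And>i. i < n \<Longrightarrow> prob_space (D i)"
    and D_sets: "\<And>i. i < n \<Longrightarrow> sets (D i) = sets (value_space m)"
    and D_nonneg: "\<And>i. i < n \<Longrightarrow> (AE x in D i. \<forall>k<m. 0 \<le> x k)"
    and M_max: "\<And>V. is_max_weight_matching n m V (M V)"
    and M_meas: "\<And>i k. {V \<in> space (profile_space n m). (i, k) \<in> M V} \<in> sets (profile_space n m)"
begin

abbreviation "P \<equiv> PiM {..<n} D"

definition q :: "nat \<Rightarrow> (nat \<Rightarrow> real) \<Rightarrow> nat \<Rightarrow> real" where
  "q i x k = rec_prob n D M i x k"

lemma P_prob: "prob_space P"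
  by (rule prob_space_PiM) (auto intro: D_prob)

lemma sets_P: "sets P = sets (profile_space n m)"
  unfolding profile_space_def by (rule sets_PiM_cong) (simp_all add: D_sets)

lemma space_P: "space P = space (profile_space n m)"
  using sets_P by (rule sets_eq_imp_space_eq)

lemma space_D: "i < n \<Longrightarrow> space (D i) = space (value_space m)"
  using D_sets by (rule sets_eq_imp_space_eq)

lemma M_matching: "is_matching n m (M V)"
  using M_max unfolding is_max_weight_matching_def by blast

lemma M_sub: "M V \<subseteq> {..<n} \<times> {..<m}"
  using M_matching unfolding is_matching_def by blast

lemma M_item_unique: "(i, k) \<in> M V \<Longrightarrow> (i, k') \<in> M V \<Longrightarrow> k = k'"
  using M_matching unfolding is_matching_def by fastforce

lemma M_buyer_unique: "(i, k) \<in> M V \<Longrightarrow> (i', k) \<in> M V \<Longrightarrow> i = i'"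
  using M_matching unfolding is_matching_def by fastforce

lemma upd_meas:
  assumes i: "i < n"
  shows "(\<lambda>(x, V). V(i := x)) \<in> measurable (value_space m \<Otimes>\<^sub>M P) (profile_space n m)"
proof -
  have s: "snd \<in> measurable (value_space m \<Otimes>\<^sub>M P) (PiM {..<n} (\<lambda>_. value_space m))"
    using measurable_snd[of "value_space m" P]
    by (simp add: measurable_cong_sets[OF refl sets_P[unfolded profile_space_def]])
  have "(\<lambda>xV. (snd xV)(i := fst xV)) \<in> measurable (value_space m \<Otimes>\<^sub>M P) (PiM {..<n} (\<lambda>_. value_space m))"
    by (rule measurable_fun_upd[OF _ s]) (use i in auto)
  then show ?thesis unfolding profile_space_def by (simp add: case_prod_beta')
qed

definition Qset :: "nat \<Rightarrow> nat \<Rightarrow> ((nat \<Rightarrow> real) \<times> (nat \<Rightarrow> nat \<Rightarrow> real)) set" where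
  "Qset i k = {xV \<in> space (value_space m \<Otimes>\<^sub>M P). (i, k) \<in> M ((snd xV)(i := fst xV))}"

lemma Qset_sets: assumes i: "i < n" shows "Qset i k \<in> sets (value_space m \<Otimes>\<^sub>M P)"
proof -
  have "Qset i k = (\<lambda>(x, V). V(i := x)) -` {V \<in> space (profile_space n m). (i, k) \<in> M V}
      \<inter> space (value_space m \<Otimes>\<^sub>M P)"
    unfolding Qset_def using measurable_space[OF upd_meas[OF i]] by (auto simp: case_prod_beta')
  also have "\<dots> \<in> sets (value_space m \<Otimes>\<^sub>M P)"
    by (rule measurable_sets[OF upd_meas[OF i] M_meas])
  finally show ?thesis .
qed

lemma Qset_Pair:
  assumes "x \<in> space (value_space m)"
  shows "Pair x -` Qset i k = {V \<in> space P. (i, k) \<in> M (V(i := x))}"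
  using assms unfolding Qset_def by (auto simp: space_pair_measure)

lemma q_eq:
  assumes "x \<in> space (value_space m)"
  shows "q i x k = measure P (Pair x -` Qset i k)"
  unfolding q_def rec_prob_def Qset_Pair[OF assms] ..

lemma q_nonneg: "0 \<le> q i x k"
  unfolding q_def rec_prob_def by simp

lemma q_le1: "q i x k \<le> 1"
proof -
  interpret prob_space P by (rule P_prob)
  show ?thesis unfolding q_def rec_prob_def by simp
qed

lemma q_meas_vs:
  assumes i: "i < n"
  shows "(\<lambda>x. q i x k) \<in> borel_measurable (value_space m)"
proof -
  interpret PP: prob_space P by (rule P_prob)
  have "(\<lambda>x. emeasure P (Pair x -` Qset i k)) \<in> borel_measurable (value_space m)"
    by (rule PP.measurable_emeasure_Pair[OF Qset_sets[OF i]])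
  then have "(\<lambda>x. enn2real (emeasure P (Pair x -` Qset i k))) \<in> borel_measurable (value_space m)"
    by measurable
  then show ?thesis
    by (rule measurable_cong[THEN iffD1, rotated]) (simp add: q_eq measure_def)
qed

lemma q_meas:
  assumes i: "i < n"
  shows "(\<lambda>x. q i x k) \<in> borel_measurable (D i)"
  using q_meas_vs[OF i] by (simp add: measurable_cong_sets[OF D_sets[OF i] refl])

lemma q_sum_le1:
  assumes i: "i < n" and x: "x \<in> space (value_space m)"
  shows "(\<Sum>k<m. q i x k) \<le> 1"
proof -
  interpret PP: prob_space P by (rule P_prob)
  have sets: "Pair x -` Qset i k \<in> sets P" for k
    by (rule sets_Pair1[OF Qset_sets[OF i]])
  have disj: "disjoint_family_on (\<lambda>k. Pair x -` Qset i k) {..<m}"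
    unfolding disjoint_family_on_def Qset_Pair[OF x] using M_item_unique by blast
  have "(\<Sum>k<m. q i x k) = (\<Sum>k<m. measure P (Pair x -` Qset i k))"
    by (simp add: q_eq[OF x])
  also have "\<dots> = measure P (\<Union>k<m. Pair x -` Qset i k)"
    by (rule PP.finite_measure_finite_Union[symmetric]) (use sets disj in auto)
  also have "\<dots> \<le> 1" by simp
  finally show ?thesis .
qed

end

lemma ennreal_sum_le: "ennreal (sum f A) \<le> (\<Sum>a\<in>A. ennreal (f a))"
proof (induction A rule: infinite_finite_induct)
  case (insert x F)
  have "ennreal (f x + sum f F) \<le> ennreal (max 0 (f x) + max 0 (sum f F))"
    by (rule ennreal_leI) simp
  also have "\<dots> = ennreal (f x) + ennreal (sum f F)"
    by (simp add: ennreal_plus[symmetric] max_def ennreal_neg del: ennreal_plus)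
  also have "\<dots> \<le> ennreal (f x) + (\<Sum>a\<in>F. ennreal (f a))"
    using insert by (intro add_left_mono) auto
  finally show ?case using insert by simp
qed auto

context S6 begin

abbreviation "Dx \<equiv> (\<lambda>j. if j \<in> {..<n} then D j else count_space {undefined})"

lemma Dx_pps: "product_prob_space Dx"
  by (rule product_prob_space_ext) (auto intro: D_prob)

lemma P_Dx: "PiM I Dx = PiM I D" if "I \<subseteq> {..<n}" for I
  by (rule PiM_cong) (use that in auto)

lemma split_P:
  assumes i: "i < n" and f: "f \<in> borel_measurable P"
  shows "(\<integral>\<^sup>+V. f V \<partial>P) = (\<integral>\<^sup>+y. (\<integral>\<^sup>+x. f (x(i := y)) \<partial>PiM ({..<n} - {i}) D) \<partial>D i)"
proof -
  interpret product_prob_space Dx "{..<n}" by (rule Dx_pps)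
  have ins: "insert i ({..<n} - {i}) = {..<n}" using i by auto
  have eqP: "PiM (insert i ({..<n} - {i})) Dx = P" unfolding ins by (rule P_Dx) simp
  have eqP': "PiM ({..<n} - {i}) Dx = PiM ({..<n} - {i}) D" by (rule P_Dx) auto
  have f': "f \<in> borel_measurable (PiM (insert i ({..<n} - {i})) Dx)"
    using f eqP by simp
  have "(\<integral>\<^sup>+V. f V \<partial>PiM (insert i ({..<n} - {i})) Dx)
      = (\<integral>\<^sup>+y. (\<integral>\<^sup>+x. f (x(i := y)) \<partial>PiM ({..<n} - {i}) Dx) \<partial>Dx i)"
    by (rule product_nn_integral_insert_rev[OF _ _ f']) auto
  then show ?thesis using i by (simp only: eqP eqP') simp
qed

lemma upd_const_meas:
  assumes i: "i < n" and y: "y \<in> space (value_space m)"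
  shows "(\<lambda>V. V(i := y)) \<in> measurable P (profile_space n m)"
proof -
  have s: "(\<lambda>V. V) \<in> measurable P (PiM {..<n} (\<lambda>_. value_space m))"
    using measurable_ident_sets[OF sets_P] by (simp add: profile_space_def)
  have "(\<lambda>V. V(i := y)) \<in> measurable P (PiM {..<n} (\<lambda>_. value_space m))"
    by (rule measurable_fun_upd[OF _ s]) (use i y in auto)
  then show ?thesis unfolding profile_space_def .
qed

lemma opt_term:
  assumes i: "i < n" and h: "h \<in> borel_measurable (value_space m)"
  shows "(\<integral>\<^sup>+V. h (V i) * indicator {V. (i, k) \<in> M V} V \<partial>P) = (\<integral>\<^sup>+y. h y * ennreal (q i y k) \<partial>D i)"
proof -
  interpret PP: prob_space P by (rule P_prob)
  interpret Di: prob_space "D i" by (rule D_prob[OF i])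
  let ?P' = "PiM ({..<n} - {i}) D"
  interpret P': prob_space ?P' by (rule prob_space_PiM) (auto intro: D_prob)
  have hD: "h \<in> borel_measurable (D i)" using h by (simp add: measurable_cong_sets[OF D_sets[OF i] refl])
  have Mset: "{V \<in> space P. (i, k) \<in> M V} \<in> sets P"
    using M_meas by (simp add: sets_P space_P)
  have ind_eq: "indicator {V. (i, k) \<in> M V} V = indicator {V \<in> space P. (i, k) \<in> M V} V" if "V \<in> space P" for V :: "nat \<Rightarrow> nat \<Rightarrow> real"
    using that by (simp split: split_indicator)
  have mf: "(\<lambda>V. h (V i) * indicator {V \<in> space P. (i, k) \<in> M V} V) \<in> borel_measurable P"
  proof -
    have "(\<lambda>V. V i) \<in> measurable P (D i)" using i by (intro measurable_component_singleton) simp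
    then have "(\<lambda>V. h (V i)) \<in> borel_measurable P" using hD by (rule measurable_compose)
    moreover have "indicator {V \<in> space P. (i, k) \<in> M V} \<in> borel_measurable P"
      using Mset by (rule borel_measurable_indicator)
    ultimately show ?thesis by (rule borel_measurable_times_ennreal)
  qed
  have Py: "{V \<in> space P. (i, k) \<in> M (V(i := y))} \<in> sets P" if y: "y \<in> space (value_space m)" for y
  proof -
    have "{V \<in> space P. (i, k) \<in> M (V(i := y))} = (\<lambda>V. V(i := y)) -` {V \<in> space (profile_space n m). (i, k) \<in> M V} \<inter> space P"
      using measurable_space[OF upd_const_meas[OF i y]] by auto
    also have "\<dots> \<in> sets P" by (rule measurable_sets[OF upd_const_meas[OF i y] M_meas])
    finally show ?thesis .
  qed
  have P'y: "(\<lambda>x. indicator {V \<in> space P. (i, k) \<in> M V} (x(i := y))) \<in> borel_measurable ?P'"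
    if y: "y \<in> space (D i)" for y
  proof -
    have "(\<lambda>x. x(i := y)) \<in> measurable ?P' (PiM {..<n} D)"
      by (rule measurable_fun_upd[where J="{..<n} - {i}"]) (use y i in auto)
    then have "(\<lambda>x. x(i := y)) \<in> measurable ?P' P" by simp
    then show ?thesis using Mset by measurable
  qed
  have "(\<integral>\<^sup>+V. h (V i) * indicator {V. (i, k) \<in> M V} V \<partial>P)
      = (\<integral>\<^sup>+V. h (V i) * indicator {V \<in> space P. (i, k) \<in> M V} V \<partial>P)"
    by (rule nn_integral_cong) (simp add: ind_eq)
  also have "\<dots> = (\<integral>\<^sup>+y. (\<integral>\<^sup>+x. h y * indicator {V \<in> space P. (i, k) \<in> M V} (x(i := y)) \<partial>?P') \<partial>D i)"
    by (subst split_P[OF i mf]) simp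
  also have "\<dots> = (\<integral>\<^sup>+y. h y * ennreal (q i y k) \<partial>D i)"
  proof (rule nn_integral_cong)
    fix y assume y: "y \<in> space (D i)"
    have yv: "y \<in> space (value_space m)" using y space_D[OF i] by simp
    have "ennreal (q i y k) = emeasure P {V \<in> space P. (i, k) \<in> M (V(i := y))}"
      unfolding q_def rec_prob_def by (simp add: PP.emeasure_eq_measure)
    also have "\<dots> = (\<integral>\<^sup>+V. indicator {V \<in> space P. (i, k) \<in> M (V(i := y))} V \<partial>P)"
      using Py[OF yv] by simp
    also have "\<dots> = (\<integral>\<^sup>+y'. (\<integral>\<^sup>+x. indicator {V \<in> space P. (i, k) \<in> M (V(i := y))} (x(i := y')) \<partial>?P') \<partial>D i)"
      by (rule split_P[OF i]) (use Py[OF yv] in measurable)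
    also have "\<dots> = (\<integral>\<^sup>+y'. (\<integral>\<^sup>+x. indicator {V \<in> space P. (i, k) \<in> M V} (x(i := y)) \<partial>?P') \<partial>D i)"
    proof (rule nn_integral_cong)+
      fix y' x assume y': "y' \<in> space (D i)" and x: "x \<in> space ?P'"
      have "x(i := y') \<in> space P \<longleftrightarrow> x(i := y) \<in> space P"
        using x y y' i by (auto simp: space_PiM PiE_iff extensional_def)
      then show "indicator {V \<in> space P. (i, k) \<in> M (V(i := y))} (x(i := y')) =
            (indicator {V \<in> space P. (i, k) \<in> M V} (x(i := y)) :: ennreal)"
        by (simp split: split_indicator)
    qed
    also have "\<dots> = (\<integral>\<^sup>+x. indicator {V \<in> space P. (i, k) \<in> M V} (x(i := y)) \<partial>?P')"
      by (simp add: Di.emeasure_space_1)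
    finally have qeq: "ennreal (q i y k) = (\<integral>\<^sup>+x. indicator {V \<in> space P. (i, k) \<in> M V} (x(i := y)) \<partial>?P')" .
    show "(\<integral>\<^sup>+x. h y * indicator {V \<in> space P. (i, k) \<in> M V} (x(i := y)) \<partial>?P') = h y * ennreal (q i y k)"
      unfolding qeq by (rule nn_integral_cmult) (rule P'y[OF y])
  qed
  finally show ?thesis .
qed

end

context S6 begin

lemma comp_meas: "k < m \<Longrightarrow> (\<lambda>y. y k) \<in> borel_measurable (value_space m)"
  unfolding value_space_def by (rule measurable_component_singleton) simp

lemma comp_meas_enn: "k < m \<Longrightarrow> (\<lambda>y. ennreal (y k)) \<in> borel_measurable (value_space m)"
  using comp_meas[of k] by measurable

lemma term_meas:
  fixes h :: "(nat \<Rightarrow> real) \<Rightarrow> ennreal"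
  assumes i: "i < n" and h: "h \<in> borel_measurable (value_space m)"
  shows "(\<lambda>V. h (V i) * indicator {V. (i, k) \<in> M V} V) \<in> borel_measurable P"
proof -
  have hD: "h \<in> borel_measurable (D i)" using h by (simp add: measurable_cong_sets[OF D_sets[OF i] refl])
  have Mset: "{V \<in> space P. (i, k) \<in> M V} \<in> sets P"
    using M_meas by (simp add: sets_P space_P)
  have "(\<lambda>V. V i) \<in> measurable P (D i)" using i by (intro measurable_component_singleton) simp
  then have "(\<lambda>V. h (V i)) \<in> borel_measurable P" using hD by (rule measurable_compose)
  moreover have "indicator {V \<in> space P. (i, k) \<in> M V} \<in> borel_measurable P"
    using Mset by (rule borel_measurable_indicator)
  ultimately have "(\<lambda>V. h (V i) * indicator {V \<in> space P. (i, k) \<in> M V} V) \<in> borel_measurable P"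
    by (rule borel_measurable_times_ennreal)
  then show ?thesis
    by (rule measurable_cong[THEN iffD1, rotated]) (simp split: split_indicator)
qed

lemma q_int_sum_le1: "(\<Sum>i<n. \<integral>\<^sup>+y. ennreal (q i y k) \<partial>D i) \<le> 1"
proof -
  interpret PP: prob_space P by (rule P_prob)
  let ?F = "\<lambda>i. {V \<in> space P. (i, k) \<in> M V}"
  have Fs: "?F i \<in> sets P" for i using M_meas by (simp add: sets_P space_P)
  have "(\<integral>\<^sup>+y. ennreal (q i y k) \<partial>D i) = emeasure P (?F i)" if i: "i < n" for i
  proof -
    have "(\<integral>\<^sup>+y. ennreal (q i y k) \<partial>D i) = (\<integral>\<^sup>+y. (\<lambda>_. 1) y * ennreal (q i y k) \<partial>D i)" by simp
    also have "\<dots> = (\<integral>\<^sup>+V. (\<lambda>_. 1) (V i) * indicator {V. (i, k) \<in> M V} V \<partial>P)"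
      by (rule opt_term[symmetric, OF i]) simp
    also have "\<dots> = (\<integral>\<^sup>+V. indicator (?F i) V \<partial>P)"
      by (rule nn_integral_cong) (simp split: split_indicator)
    also have "\<dots> = emeasure P (?F i)" using Fs by simp
    finally show ?thesis .
  qed
  then have "(\<Sum>i<n. \<integral>\<^sup>+y. ennreal (q i y k) \<partial>D i) = (\<Sum>i<n. emeasure P (?F i))" by simp
  also have "\<dots> = emeasure P (\<Union>i<n. ?F i)"
    by (rule sum_emeasure) (use Fs M_buyer_unique in \<open>auto simp: disjoint_family_on_def\<close>)
  also have "\<dots> \<le> 1" by (rule PP.measure_le_1)
  finally show ?thesis .
qed

lemma OPT_le:
  "(\<integral>\<^sup>+V. ennreal (OPT M V) \<partial>P) \<le> (\<Sum>k<m. \<Sum>i<n. \<integral>\<^sup>+y. ennreal (y k) * ennreal (q i y k) \<partial>D i)"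
proof -
  have pw: "ennreal (OPT M V) \<le> (\<Sum>i<n. \<Sum>k<m. ennreal (V i k) * indicator {V. (i, k) \<in> M V} V)" for V
  proof -
    have "OPT M V = (\<Sum>p\<in>M V. V (fst p) (snd p))"
      unfolding OPT_def match_weight_def by (simp add: case_prod_beta')
    also have "\<dots> = (\<Sum>p\<in>{..<n} \<times> {..<m}. if p \<in> M V then V (fst p) (snd p) else 0)"
    proof -
      have "(\<Sum>p\<in>{..<n} \<times> {..<m}. if p \<in> M V then V (fst p) (snd p) else 0)
          = (\<Sum>p\<in>{..<n} \<times> {..<m} \<inter> M V. V (fst p) (snd p))"
        by (rule sum.inter_restrict[symmetric]) simp
      also have "{..<n} \<times> {..<m} \<inter> M V = M V" using M_sub[of V] by blast
      finally show ?thesis by simp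
    qed
    also have "\<dots> = (\<Sum>i<n. \<Sum>k<m. if (i, k) \<in> M V then V i k else 0)"
      by (simp add: sum.cartesian_product case_prod_beta')
    finally have "ennreal (OPT M V) \<le> (\<Sum>i<n. ennreal (\<Sum>k<m. if (i, k) \<in> M V then V i k else 0))"
      using ennreal_sum_le by simp
    also have "\<dots> \<le> (\<Sum>i<n. \<Sum>k<m. ennreal (if (i, k) \<in> M V then V i k else 0))"
      by (intro sum_mono ennreal_sum_le)
    also have "\<dots> = (\<Sum>i<n. \<Sum>k<m. ennreal (V i k) * indicator {V. (i, k) \<in> M V} V)"
      by (intro sum.cong refl) (simp split: split_indicator)
    finally show ?thesis .
  qed
  have "(\<integral>\<^sup>+V. ennreal (OPT M V) \<partial>P) \<le> (\<integral>\<^sup>+V. (\<Sum>i<n. \<Sum>k<m. ennreal (V i k) * indicator {V. (i, k) \<in> M V} V) \<partial>P)"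
    by (rule nn_integral_mono) (rule pw)
  also have "\<dots> = (\<Sum>i<n. \<Sum>k<m. \<integral>\<^sup>+V. ennreal (V i k) * indicator {V. (i, k) \<in> M V} V \<partial>P)"
  proof -
    have tm: "(\<lambda>V. ennreal (V i k) * indicator {V. (i, k) \<in> M V} V) \<in> borel_measurable P" if "i < n" "k < m" for i k
      using term_meas[OF that(1), of "\<lambda>y. ennreal (y k)"] comp_meas[OF that(2)] by simp
    have "(\<integral>\<^sup>+V. (\<Sum>i<n. \<Sum>k<m. ennreal (V i k) * indicator {V. (i, k) \<in> M V} V) \<partial>P)
      = (\<Sum>i<n. \<integral>\<^sup>+V. (\<Sum>k<m. ennreal (V i k) * indicator {V. (i, k) \<in> M V} V) \<partial>P)"
    proof (rule nn_integral_sum)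
      fix i assume "i \<in> {..<n}"
      then show "(\<lambda>V. \<Sum>k<m. ennreal (V i k) * indicator {V. (i, k) \<in> M V} V) \<in> borel_measurable P"
        by (intro borel_measurable_sum tm) auto
    qed
    also have "\<dots> = (\<Sum>i<n. \<Sum>k<m. \<integral>\<^sup>+V. ennreal (V i k) * indicator {V. (i, k) \<in> M V} V \<partial>P)"
    proof (rule sum.cong[OF refl])
      fix i assume "i \<in> {..<n}"
      then show "(\<integral>\<^sup>+V. (\<Sum>k<m. ennreal (V i k) * indicator {V. (i, k) \<in> M V} V) \<partial>P)
          = (\<Sum>k<m. \<integral>\<^sup>+V. ennreal (V i k) * indicator {V. (i, k) \<in> M V} V \<partial>P)"
        by (intro nn_integral_sum tm) auto
    qed
    finally show ?thesis .
  qed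
  also have "\<dots> = (\<Sum>i<n. \<Sum>k<m. \<integral>\<^sup>+y. ennreal (y k) * ennreal (q i y k) \<partial>D i)"
    by (intro sum.cong refl opt_term[of _ "\<lambda>y. ennreal (y _)", simplified]) (auto intro: comp_meas_enn)
  also have "\<dots> = (\<Sum>k<m. \<Sum>i<n. \<integral>\<^sup>+y. ennreal (y k) * ennreal (q i y k) \<partial>D i)"
    by (rule sum.swap)
  finally show ?thesis .
qed

end

definition stepf :: "(nat \<Rightarrow> nat option) \<Rightarrow> (nat \<Rightarrow> nat \<Rightarrow> bool) \<Rightarrow> (nat \<Rightarrow> nat \<Rightarrow> real)
   \<Rightarrow> nat \<Rightarrow> nat set \<times> real \<Rightarrow> nat set \<times> real" where
  "stepf c cond val i Sw = (case c i of None \<Rightarrow> Sw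
      | Some k \<Rightarrow> if k \<notin> fst Sw \<and> cond i k then (insert k (fst Sw), snd Sw + val i k) else Sw)"

definition LB1 :: "nat \<Rightarrow> (nat \<Rightarrow> nat option) \<Rightarrow> (nat \<Rightarrow> nat \<Rightarrow> bool) \<Rightarrow> (nat \<Rightarrow> real) \<Rightarrow> nat set \<Rightarrow> nat set \<Rightarrow> real" where
  "LB1 m c cond tau S A = (\<Sum>k<m. if k \<notin> S \<and> (\<exists>j\<in>A. c j = Some k \<and> cond j k) then tau k else 0)"

definition LB2 :: "nat \<Rightarrow> (nat \<Rightarrow> nat option) \<Rightarrow> (nat \<Rightarrow> nat \<Rightarrow> bool) \<Rightarrow> (nat \<Rightarrow> nat \<Rightarrow> real) \<Rightarrow> (nat \<Rightarrow> real)
   \<Rightarrow> (nat \<Rightarrow> real) \<Rightarrow> nat set \<Rightarrow> nat set \<Rightarrow> nat \<Rightarrow> real" where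
  "LB2 m c cond val tau T S A i = (\<Sum>k<m. if k \<notin> S \<and> c i = Some k \<and> cond i k \<and>
      (\<forall>j\<in>A. j \<noteq> i \<and> T j \<le> T i \<longrightarrow> \<not> (c j = Some k \<and> cond j k)) then val i k - tau k else 0)"

lemma LB2_nonneg:
  assumes cv: "\<And>i k. cond i k \<Longrightarrow> tau k \<le> val i k"
  shows "0 \<le> LB2 m c cond val tau T S A i"
  unfolding LB2_def by (intro sum_nonneg) (auto dest: cv)

lemma LB2_mono:
  assumes cv: "\<And>i k. cond i k \<Longrightarrow> tau k \<le> val i k" and "S' \<subseteq> S" "A' \<subseteq> A"
  shows "LB2 m c cond val tau T S A i \<le> LB2 m c cond val tau T S' A' i"
  unfolding LB2_def using assms(2,3) by (intro sum_mono) (auto dest: cv)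

lemma fold_lb:
  assumes cm: "\<And>i k. c i = Some k \<Longrightarrow> k < m"
    and cv: "\<And>i k. cond i k \<Longrightarrow> tau k \<le> val i k"
    and tnn: "\<And>k. 0 \<le> tau k"
    and "distinct xs" "sorted (map T xs)"
  shows "w + LB1 m c cond tau S (set xs) + (\<Sum>i\<in>set xs. LB2 m c cond val tau T S (set xs) i)
     \<le> snd (fold (stepf c cond val) xs (S, w))"
  using assms(4,5)
proof (induction xs arbitrary: S w)
  case Nil
  then show ?case by (simp add: LB1_def)
next
  case (Cons x xs)
  have xn: "x \<notin> set xs" and dist: "distinct xs" and srt: "sorted (map T xs)"
    and Tx: "\<And>j. j \<in> set xs \<Longrightarrow> T x \<le> T j"
    using Cons.prems by auto
  let ?L2 = "\<lambda>S A i. LB2 m c cond val tau T S A i"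
  show ?case
  proof (cases "c x")
    case None
    have "LB1 m c cond tau S (set (x # xs)) = LB1 m c cond tau S (set xs)"
      unfolding LB1_def using None by (intro sum.cong) auto
    moreover have "?L2 S (set (x # xs)) x = 0"
      unfolding LB2_def using None by simp
    moreover have "(\<Sum>i\<in>set xs. ?L2 S (set (x # xs)) i) \<le> (\<Sum>i\<in>set xs. ?L2 S (set xs) i)"
      by (intro sum_mono LB2_mono cv) auto
    ultimately have "w + LB1 m c cond tau S (set (x # xs)) + (\<Sum>i\<in>set (x # xs). ?L2 S (set (x # xs)) i)
        \<le> w + LB1 m c cond tau S (set xs) + (\<Sum>i\<in>set xs. ?L2 S (set xs) i)"
      using xn by simp
    also have "\<dots> \<le> snd (fold (stepf c cond val) xs (S, w))" by (rule Cons.IH[OF dist srt])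
    moreover have "stepf c cond val x (S, w) = (S, w)" using None by (simp add: stepf_def)
    ultimately show ?thesis by simp
  next
    case (Some k0)
    have k0m: "k0 < m" using cm[OF Some] .
    show ?thesis
    proof (cases "k0 \<notin> S \<and> cond x k0")
      case True
      let ?S' = "insert k0 S"
      have st: "stepf c cond val x (S, w) = (?S', w + val x k0)"
        using Some True by (simp add: stepf_def)
      have "LB1 m c cond tau S (set (x # xs)) \<le> (\<Sum>k<m. (if k = k0 then tau k0 else 0)
             + (if k \<notin> ?S' \<and> (\<exists>j\<in>set xs. c j = Some k \<and> cond j k) then tau k else 0))"
        unfolding LB1_def using Some tnn by (intro sum_mono) auto
      also have "\<dots> = tau k0 + LB1 m c cond tau ?S' (set xs)"
        unfolding LB1_def sum.distrib using k0m by simp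
      finally have l1: "LB1 m c cond tau S (set (x # xs)) \<le> tau k0 + LB1 m c cond tau ?S' (set xs)" .
      have "?L2 S (set (x # xs)) x \<le> (\<Sum>k<m. if k = k0 then val x k0 - tau k0 else 0)"
        unfolding LB2_def using Some True cv[of x k0] by (intro sum_mono) auto
      also have "\<dots> = val x k0 - tau k0" using k0m by simp
      finally have l2x: "?L2 S (set (x # xs)) x \<le> val x k0 - tau k0" .
      have l2: "?L2 S (set (x # xs)) i \<le> ?L2 ?S' (set xs) i" if i: "i \<in> set xs" for i
        unfolding LB2_def
      proof (intro sum_mono)
        fix k assume "k \<in> {..<m}"
        show "(if k \<notin> S \<and> c i = Some k \<and> cond i k \<and>
              (\<forall>j\<in>set (x # xs). j \<noteq> i \<and> T j \<le> T i \<longrightarrow> \<not> (c j = Some k \<and> cond j k)) then val i k - tau k else 0)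
          \<le> (if k \<notin> ?S' \<and> c i = Some k \<and> cond i k \<and>
              (\<forall>j\<in>set xs. j \<noteq> i \<and> T j \<le> T i \<longrightarrow> \<not> (c j = Some k \<and> cond j k)) then val i k - tau k else 0)"
          using Some True Tx[OF i] xn i by (auto dest: cv)
      qed
      have "w + LB1 m c cond tau S (set (x # xs)) + (\<Sum>i\<in>set (x # xs). ?L2 S (set (x # xs)) i)
          = w + LB1 m c cond tau S (set (x # xs)) + ?L2 S (set (x # xs)) x + (\<Sum>i\<in>set xs. ?L2 S (set (x # xs)) i)"
        using xn by simp
      also have "\<dots> \<le> (w + val x k0) + LB1 m c cond tau ?S' (set xs) + (\<Sum>i\<in>set xs. ?L2 ?S' (set xs) i)"
      proof -
        have "(\<Sum>i\<in>set xs. ?L2 S (set (x # xs)) i) \<le> (\<Sum>i\<in>set xs. ?L2 ?S' (set xs) i)"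
          by (rule sum_mono) (rule l2)
        then show ?thesis using l1 l2x by linarith
      qed
      also have "\<dots> \<le> snd (fold (stepf c cond val) xs (?S', w + val x k0))" by (rule Cons.IH[OF dist srt])
      finally show ?thesis using st by simp
    next
      case False
      have st: "stepf c cond val x (S, w) = (S, w)"
        using Some False by (auto simp: stepf_def)
      have "LB1 m c cond tau S (set (x # xs)) = LB1 m c cond tau S (set xs)"
        unfolding LB1_def using Some False by (intro sum.cong) auto
      moreover have "?L2 S (set (x # xs)) x = 0"
        unfolding LB2_def using Some False by (intro sum.neutral) auto
      moreover have "(\<Sum>i\<in>set xs. ?L2 S (set (x # xs)) i) \<le> (\<Sum>i\<in>set xs. ?L2 S (set xs) i)"
        by (intro sum_mono LB2_mono cv) auto
      ultimately have "w + LB1 m c cond tau S (set (x # xs)) + (\<Sum>i\<in>set (x # xs). ?L2 S (set (x # xs)) i)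
          \<le> w + LB1 m c cond tau S (set xs) + (\<Sum>i\<in>set xs. ?L2 S (set xs) i)"
        using xn by simp
      also have "\<dots> \<le> snd (fold (stepf c cond val) xs (S, w))" by (rule Cons.IH[OF dist srt])
      finally show ?thesis using st by simp
    qed
  qed
qed


lemma prod_ind: "finite A \<Longrightarrow> (\<Prod>j\<in>A. if P j then (0::real) else 1) = (if \<exists>j\<in>A. P j then 0 else 1)"
  by (induction A rule: finite_induct) auto

definition pos :: "real \<Rightarrow> real" where "pos x = max 0 x"

lemma pos_nonneg[simp]: "0 \<le> pos x" unfolding pos_def by simp

locale S6t = S6 +
  fixes \<tau> \<theta> :: "nat \<Rightarrow> real"
  assumes tau_nn: "\<And>k. 0 \<le> \<tau> k"
    and theta_nn: "\<And>k. 0 \<le> \<theta> k" and theta_le1: "\<And>k. \<theta> k \<le> 1"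
begin

definition cand :: "nat \<Rightarrow> (nat \<Rightarrow> real) \<Rightarrow> real \<Rightarrow> nat option" where
  "cand j v u = select_cand m (q j v) u"

definition acc :: "nat \<Rightarrow> nat \<Rightarrow> (nat \<Rightarrow> real) \<Rightarrow> real \<Rightarrow> real \<Rightarrow> bool" where
  "acc j k v u w \<longleftrightarrow> cand j v u = Some k \<and> (\<tau> k < v k \<or> (v k = \<tau> k \<and> w < \<theta> k))"

definition F1 :: "nat \<Rightarrow> (nat \<Rightarrow> nat \<Rightarrow> real) \<Rightarrow> (nat \<Rightarrow> real) \<Rightarrow> (nat \<Rightarrow> real) \<Rightarrow> real" where
  "F1 k V U W = 1 - (\<Prod>j<n. if acc j k (V j) (U j) (W j) then 0 else 1)"

definition F2 :: "nat \<Rightarrow> nat \<Rightarrow> (nat \<Rightarrow> nat \<Rightarrow> real) \<Rightarrow> (nat \<Rightarrow> real) \<Rightarrow> (nat \<Rightarrow> real) \<Rightarrow> (nat \<Rightarrow> real) \<Rightarrow> real" where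
  "F2 i k V T U W = (\<Prod>j<n. if j = i then pos (V i k - \<tau> k) * (if cand i (V i) (U i) = Some k then 1 else 0)
       else if T j \<le> T i \<and> acc j k (V j) (U j) (W j) then 0 else 1)"

lemma F1_nonneg: "0 \<le> F1 k V U W"
  unfolding F1_def by (simp add: prod_ind)

lemma F2_nonneg: "0 \<le> F2 i k V T U W"
  unfolding F2_def by (intro prod_nonneg) auto

lemma F1_eq: "F1 k V U W = (if \<exists>j<n. acc j k (V j) (U j) (W j) then 1 else 0)"
  unfolding F1_def by (simp add: prod_ind)

lemma F2_eq:
  assumes i: "i < n"
  shows "F2 i k V T U W = pos (V i k - \<tau> k) * (if cand i (V i) (U i) = Some k then 1 else 0) *
     (if \<exists>j\<in>{..<n} - {i}. T j \<le> T i \<and> acc j k (V j) (U j) (W j) then 0 else 1)"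
proof -
  have "F2 i k V T U W = (if i = i then pos (V i k - \<tau> k) * (if cand i (V i) (U i) = Some k then 1 else 0)
       else 1) * (\<Prod>j\<in>{..<n} - {i}. if j = i then pos (V i k - \<tau> k) * (if cand i (V i) (U i) = Some k then 1 else 0)
       else if T j \<le> T i \<and> acc j k (V j) (U j) (W j) then 0 else 1)"
    unfolding F2_def using i by (subst prod.remove[of _ i]) auto
  also have "(\<Prod>j\<in>{..<n} - {i}. if j = i then pos (V i k - \<tau> k) * (if cand i (V i) (U i) = Some k then 1 else 0)
       else if T j \<le> T i \<and> acc j k (V j) (U j) (W j) then 0 else 1)
     = (\<Prod>j\<in>{..<n} - {i}. if T j \<le> T i \<and> acc j k (V j) (U j) (W j) then 0 else 1)"
    by (intro prod.cong) auto
  finally show ?thesis by (simp add: prod_ind)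
qed

lemma alg_lb:
  "(\<Sum>k<m. \<tau> k * F1 k V U W) + (\<Sum>k<m. \<Sum>i<n. F2 i k V T U W) \<le> alg_welfare n m D M \<tau> \<theta> V T U W"
proof -
  let ?c = "\<lambda>i. cand i (V i) (U i)"
  let ?cond = "\<lambda>i k. \<tau> k < V i k \<or> (V i k = \<tau> k \<and> W i < \<theta> k)"
  let ?val = "\<lambda>i k. V i k"
  have step: "(\<lambda>i. buyer_step \<tau> \<theta> (V i) (select_cand m (rec_prob n D M i (V i)) (U i)) (W i)) = stepf ?c ?cond ?val"
    by (intro ext) (simp add: buyer_step_def stepf_def cand_def q_def[abs_def] split: option.splits)
  have "0 + LB1 m ?c ?cond \<tau> {} (set (sort_key T [0..<n])) + (\<Sum>i\<in>set (sort_key T [0..<n]). LB2 m ?c ?cond ?val \<tau> T {} (set (sort_key T [0..<n])) i)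
     \<le> snd (fold (stepf ?c ?cond ?val) (sort_key T [0..<n]) ({}, 0))"
    by (rule fold_lb) (auto simp: cand_def intro: select_cand_lt tau_nn)
  then have lb: "LB1 m ?c ?cond \<tau> {} {..<n} + (\<Sum>i<n. LB2 m ?c ?cond ?val \<tau> T {} {..<n} i) \<le> alg_welfare n m D M \<tau> \<theta> V T U W"
    unfolding alg_welfare_def step by (simp add: atLeast0LessThan)
  have e1: "LB1 m ?c ?cond \<tau> {} {..<n} = (\<Sum>k<m. \<tau> k * F1 k V U W)"
    unfolding LB1_def F1_eq acc_def by (intro sum.cong) auto
  have e2: "LB2 m ?c ?cond ?val \<tau> T {} {..<n} i = (\<Sum>k<m. F2 i k V T U W)" if i: "i < n" for i
    unfolding LB2_def F2_eq[OF i]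
  proof (intro sum.cong refl)
    fix k assume "k \<in> {..<m}"
    show "(if k \<notin> {} \<and> ?c i = Some k \<and> ?cond i k \<and> (\<forall>j\<in>{..<n}. j \<noteq> i \<and> T j \<le> T i \<longrightarrow> \<not> (?c j = Some k \<and> ?cond j k))
           then V i k - \<tau> k else 0) =
          pos (V i k - \<tau> k) * (if cand i (V i) (U i) = Some k then 1 else 0) *
          (if \<exists>j\<in>{..<n} - {i}. T j \<le> T i \<and> acc j k (V j) (U j) (W j) then 0 else 1)"
      unfolding acc_def pos_def by auto
  qed
  show ?thesis using lb e1 e2 by (simp add: sum.swap[of _ "{..<m}"])
qed

end

lemma unif_vec_prob: "prob_space (unif_vec n)"
  unfolding unif_vec_def by (rule prob_space_PiM) (rule unif01_prob)

lemma emeasure_unif01_UNIV[simp]: "emeasure unif01 UNIV = 1"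
  using prob_space.emeasure_space_1[OF unif01_prob] by simp

lemma meas_prod_PiM:
  assumes "\<And>j. j \<in> I \<Longrightarrow> g j \<in> borel_measurable (N j)"
  shows "(\<lambda>x. \<Prod>j\<in>I. (g j (x j) :: real)) \<in> borel_measurable (PiM I N)"
proof (intro borel_measurable_prod)
  fix j assume j: "j \<in> I"
  show "(\<lambda>x. g j (x j)) \<in> borel_measurable (PiM I N)"
    using measurable_comp[OF measurable_component_singleton[of j I N, OF j] assms[OF j]] by (simp add: comp_def)
qed

context S6t begin

definition \<phi> :: "nat \<Rightarrow> real \<Rightarrow> real" where
  "\<phi> k y = (if \<tau> k < y then 1 else if y = \<tau> k then \<theta> k else 0)"

lemma phi_nn: "0 \<le> \<phi> k y" and phi_le1: "\<phi> k y \<le> 1"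
  unfolding \<phi>_def using theta_nn theta_le1 by auto

definition Y1 :: "nat \<Rightarrow> (nat \<Rightarrow> nat \<Rightarrow> real) \<Rightarrow> (nat \<Rightarrow> real) \<Rightarrow> real" where
  "Y1 k V U = 1 - (\<Prod>j<n. 1 - (if cand j (V j) (U j) = Some k then \<phi> k (V j k) else 0))"

definition Y2 :: "nat \<Rightarrow> nat \<Rightarrow> (nat \<Rightarrow> nat \<Rightarrow> real) \<Rightarrow> (nat \<Rightarrow> real) \<Rightarrow> (nat \<Rightarrow> real) \<Rightarrow> real" where
  "Y2 i k V T U = (\<Prod>j<n. if j = i then pos (V i k - \<tau> k) * (if cand i (V i) (U i) = Some k then 1 else 0)
       else 1 - (if T j \<le> T i \<and> cand j (V j) (U j) = Some k then \<phi> k (V j k) else 0))"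

lemma acc_meas: "(\<lambda>w. if b \<and> acc j k v u w then (0::real) else 1) \<in> borel_measurable unif01"
  unfolding acc_def by measurable

lemma acc_int:
  "(\<integral>\<^sup>+w. ennreal (if b \<and> acc j k v u w then 0 else 1) \<partial>unif01)
     = ennreal (1 - (if b \<and> cand j v u = Some k then \<phi> k (v k) else 0))"
proof -
  interpret U: prob_space unif01 by (rule unif01_prob)
  show ?thesis
  proof (cases "b \<and> cand j v u = Some k \<and> v k = \<tau> k")
    case True
    have "(\<integral>\<^sup>+w. ennreal (if b \<and> acc j k v u w then 0 else 1) \<partial>unif01)
        = (\<integral>\<^sup>+w. ennreal (if w \<in> {w. w < \<theta> k} then 0 else 1) \<partial>unif01)"
      using True by (intro nn_integral_cong) (auto simp: acc_def)
    also have "\<dots> = ennreal (U.prob {w. w < \<theta> k} * 0 + (1 - U.prob {w. w < \<theta> k}) * 1)"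
      by (rule U.nn_integral_if_set) auto
    also have "U.prob {w. w < \<theta> k} = \<theta> k"
      using emeasure_unif01_less[OF theta_nn theta_le1, of k] theta_nn[of k]
      by (simp add: U.emeasure_eq_measure)
    finally show ?thesis using True by (simp add: \<phi>_def)
  next
    case False
    then have eq: "(if b \<and> acc j k v u w then 0 else 1) = (if b \<and> cand j v u = Some k \<and> \<tau> k < v k then 0 else (1::real))" for w
      by (auto simp: acc_def)
    show ?thesis
    proof (cases "b \<and> cand j v u = Some k \<and> \<tau> k < v k")
      case True
      then show ?thesis unfolding eq by (simp add: \<phi>_def)
    next
      case F2: False
      then have "(if b \<and> cand j v u = Some k then \<phi> k (v k) else 0) = 0"
        using False by (auto simp: \<phi>_def)
      then show ?thesis unfolding eq using F2 by simp
    qed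
  qed
qed

lemma W_F1:
  "(\<integral>\<^sup>+W. ennreal (F1 k V U W) \<partial>unif_vec n) = ennreal (Y1 k V U)"
  unfolding F1_def Y1_def unif_vec_def
  apply (rule nn_integral_PiM_one_minus_prod[where r="\<lambda>j. 1 - (if cand j (V j) (U j) = Some k then \<phi> k (V j k) else 0)"])
  apply (rule unif01_prob)
  apply simp
  apply (rule acc_meas[of True, simplified])
  apply simp
  apply simp
  subgoal for j using acc_int[of True j k "V j" "U j"] by simp
  subgoal using phi_le1 by simp
  subgoal using phi_nn by simp
  done

lemma W_F2:
  "(\<integral>\<^sup>+W. ennreal (F2 i k V T U W) \<partial>unif_vec n) = ennreal (Y2 i k V T U)"
  unfolding F2_def Y2_def unif_vec_def
proof (rule nn_integral_PiM_prod_real)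
  fix j assume "j \<in> {..<n}"
  show "(\<integral>\<^sup>+w. ennreal (if j = i then pos (V i k - \<tau> k) * (if cand i (V i) (U i) = Some k then 1 else 0)
       else if T j \<le> T i \<and> acc j k (V j) (U j) w then 0 else 1) \<partial>unif01) =
    ennreal (if j = i then pos (V i k - \<tau> k) * (if cand i (V i) (U i) = Some k then 1 else 0)
       else 1 - (if T j \<le> T i \<and> cand j (V j) (U j) = Some k then \<phi> k (V j k) else 0))"
  proof (cases "j = i")
    case True
    show ?thesis using True by (simp add: nn_integral_const)
  next
    case False
    show ?thesis unfolding if_not_P[OF False] by (rule acc_int)
  qed
next
  fix j assume "j \<in> {..<n}"
  show "(\<lambda>w. if j = i then pos (V i k - \<tau> k) * (if cand i (V i) (U i) = Some k then 1 else 0)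
       else if T j \<le> T i \<and> acc j k (V j) (U j) w then 0 else (1::real)) \<in> borel_measurable unif01"
  proof (cases "j = i")
    case True then show ?thesis by simp
  next
    case False show ?thesis unfolding if_not_P[OF False] by (rule acc_meas)
  qed
next
  show "finite {..<n}" by simp
next
  fix j show "prob_space unif01" by (rule unif01_prob)
next
  fix j x assume "j \<in> {..<n}"
  show "0 \<le> (if j = i then pos (V i k - \<tau> k) * (if cand i (V i) (U i) = Some k then 1 else 0)
       else if T j \<le> T i \<and> acc j k (V j) (U j) x then 0 else (1::real))" by simp
next
  fix j assume "j \<in> {..<n}"
  show "0 \<le> (if j = i then pos (V i k - \<tau> k) * (if cand i (V i) (U i) = Some k then 1 else 0)
       else 1 - (if T j \<le> T i \<and> cand j (V j) (U j) = Some k then \<phi> k (V j k) else 0))"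
    using phi_le1[of k "V j k"] by simp
qed

lemma F1_meas: "(\<lambda>W. F1 k V U W) \<in> borel_measurable (unif_vec n)"
  unfolding F1_def unif_vec_def
  by (rule borel_measurable_diff[OF borel_measurable_const meas_prod_PiM]) (rule acc_meas[of True, simplified])

lemma F2_meas: "(\<lambda>W. F2 i k V T U W) \<in> borel_measurable (unif_vec n)"
  unfolding F2_def unif_vec_def
proof (rule meas_prod_PiM)
  fix j show "(\<lambda>w. if j = i then pos (V i k - \<tau> k) * (if cand i (V i) (U i) = Some k then 1 else 0)
       else if T j \<le> T i \<and> acc j k (V j) (U j) w then 0 else (1::real)) \<in> borel_measurable unif01"
  proof (cases "j = i")
    case True then show ?thesis by simp
  next
    case False show ?thesis unfolding if_not_P[OF False] by (rule acc_meas)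
  qed
qed

end

context S6t begin

definition \<alpha> :: "nat \<Rightarrow> nat \<Rightarrow> (nat \<Rightarrow> real) \<Rightarrow> real" where
  "\<alpha> j k v = q j v k * \<phi> k (v k)"

lemma alpha_nn: "0 \<le> \<alpha> j k v" and alpha_le1: "\<alpha> j k v \<le> 1"
  unfolding \<alpha>_def using q_nonneg[of j v k] q_le1[of j v k] phi_nn[of k "v k"] phi_le1[of k "v k"]
  by (auto intro: mult_le_one)

definition Z1 :: "nat \<Rightarrow> (nat \<Rightarrow> nat \<Rightarrow> real) \<Rightarrow> real" where
  "Z1 k V = 1 - (\<Prod>j<n. 1 - \<alpha> j k (V j))"

definition Z2 :: "nat \<Rightarrow> nat \<Rightarrow> (nat \<Rightarrow> nat \<Rightarrow> real) \<Rightarrow> (nat \<Rightarrow> real) \<Rightarrow> real" where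
  "Z2 i k V T = (\<Prod>j<n. if j = i then pos (V i k - \<tau> k) * q i (V i) k
       else 1 - (if T j \<le> T i then \<alpha> j k (V j) else 0))"

lemma V_comp:
  assumes "V \<in> space P" "j < n" shows "V j \<in> space (value_space m)"
proof -
  have "V j \<in> space (D j)" using assms by (simp add: space_PiM PiE_iff)
  then show ?thesis using space_D[OF assms(2)] by simp
qed

lemma cand_set: "{u. cand j v u = Some k} \<in> sets unif01"
  unfolding cand_def by (rule select_cand_sets)

lemma cand_meas: "(\<lambda>u. if cand j v u = Some k then x else (y::real)) \<in> borel_measurable unif01"
proof -
  have "(\<lambda>u. if u \<in> {u. cand j v u = Some k} then x else y) \<in> borel_measurable unif01"
    by (rule measurable_If_set) (use cand_set in auto)
  then show ?thesis by simp
qed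

lemma cand_int:
  assumes j: "j < n" and v: "v \<in> space (value_space m)" and k: "k < m" and "0 \<le> x" "0 \<le> y"
  shows "(\<integral>\<^sup>+u. ennreal (if cand j v u = Some k then x else y) \<partial>unif01) = ennreal (q j v k * x + (1 - q j v k) * y)"
proof -
  interpret U: prob_space unif01 by (rule unif01_prob)
  have pr: "U.prob {u. cand j v u = Some k} = q j v k"
  proof -
    have "emeasure unif01 {u. cand j v u = Some k} = ennreal (q j v k)"
      unfolding cand_def
      by (rule emeasure_select_cand[OF q_nonneg q_sum_le1[OF j v] k])
    then show ?thesis by (simp add: U.emeasure_eq_measure q_nonneg)
  qed
  have "(\<integral>\<^sup>+u. ennreal (if cand j v u = Some k then x else y) \<partial>unif01)
      = (\<integral>\<^sup>+u. ennreal (if u \<in> {u. cand j v u = Some k} then x else y) \<partial>unif01)" by simp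
  also have "\<dots> = ennreal (U.prob {u. cand j v u = Some k} * x + (1 - U.prob {u. cand j v u = Some k}) * y)"
    by (rule U.nn_integral_if_set[OF cand_set assms(4) assms(5)])
  finally show ?thesis unfolding pr .
qed

lemma U_Y1:
  assumes V: "V \<in> space P" and k: "k < m"
  shows "(\<integral>\<^sup>+U. ennreal (Y1 k V U) \<partial>unif_vec n) = ennreal (Z1 k V)"
proof -
  have Vj: "V j \<in> space (value_space m)" if "j < n" for j
    using V_comp[OF V that] .
  have eq: "Y1 k V U = 1 - (\<Prod>j<n. (\<lambda>j u. if cand j (V j) u = Some k then 1 - \<phi> k (V j k) else 1) j (U j))" for U
  proof -
    have e: "(1::real) - (if b then x else 0) = (if b then 1 - x else 1)" for b x by simp
    show ?thesis by (simp only: Y1_def e)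
  qed
  show ?thesis
    unfolding eq Z1_def unif_vec_def
    apply (rule nn_integral_PiM_one_minus_prod[where r="\<lambda>j. 1 - \<alpha> j k (V j)"])
    apply (rule unif01_prob)
    apply simp
    apply (rule cand_meas)
    subgoal using phi_le1 by simp
    subgoal using phi_nn by simp
    subgoal for j
    proof -
      assume j: "j \<in> {..<n}"
      then have j': "j < n" by simp
      show ?thesis using cand_int[OF j' Vj[OF j'] k, of "1 - \<phi> k (V j k)" 1] phi_le1[of k "V j k"]
        by (simp add: \<alpha>_def algebra_simps)
    qed
    subgoal using alpha_le1 by simp
    subgoal using alpha_nn by simp
    done
qed

lemma U_Y2:
  assumes V: "V \<in> space P" and k: "k < m" and i: "i < n"
  shows "(\<integral>\<^sup>+U. ennreal (Y2 i k V T U) \<partial>unif_vec n) = ennreal (Z2 i k V T)"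
proof -
  have Vj: "V j \<in> space (value_space m)" if "j < n" for j
    using V_comp[OF V that] .
  define g where "g j u = (if j = i then (if cand i (V i) u = Some k then pos (V i k - \<tau> k) else 0)
       else if cand j (V j) u = Some k then 1 - (if T j \<le> T i then \<phi> k (V j k) else 0) else 1)" for j u
  have eq: "Y2 i k V T U = (\<Prod>j<n. g j (U j))" for U
    unfolding Y2_def g_def by (intro prod.cong) auto
  show ?thesis
    unfolding eq Z2_def unif_vec_def
  proof (rule nn_integral_PiM_prod_real)
    fix j assume j: "j \<in> {..<n}"
    show "g j \<in> borel_measurable unif01"
    proof (cases "j = i")
      case True show ?thesis unfolding g_def if_P[OF True] by (rule cand_meas)
    next
      case False show ?thesis unfolding g_def if_not_P[OF False] by (rule cand_meas)
    qed
  next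
    fix j x assume j: "j \<in> {..<n}"
    show "0 \<le> g j x" unfolding g_def using phi_le1[of k "V j k"] by auto
  next
    fix j assume j: "j \<in> {..<n}"
    show "(\<integral>\<^sup>+u. ennreal (g j u) \<partial>unif01) = ennreal (if j = i then pos (V i k - \<tau> k) * q i (V i) k
       else 1 - (if T j \<le> T i then \<alpha> j k (V j) else 0))"
    proof (cases "j = i")
      case True
      show ?thesis unfolding g_def if_P[OF True] using True
        using cand_int[OF i Vj[OF i] k, of "pos (V i k - \<tau> k)" 0] by (simp add: mult.commute)
    next
      case False
      have j': "j < n" using j by simp
      show ?thesis unfolding g_def if_not_P[OF False]
        using cand_int[OF j' Vj[OF j'] k, of "1 - (if T j \<le> T i then \<phi> k (V j k) else 0)" 1]
          phi_le1[of k "V j k"]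
        by (simp add: \<alpha>_def algebra_simps)
    qed
  next
    fix j assume j: "j \<in> {..<n}"
    show "0 \<le> (if j = i then pos (V i k - \<tau> k) * q i (V i) k else 1 - (if T j \<le> T i then \<alpha> j k (V j) else 0))"
      using alpha_le1[of j k "V j"] q_nonneg[of i "V i" k] by auto
  next
    show "finite {..<n}" by simp
  next
    fix j show "prob_space unif01" by (rule unif01_prob)
  qed
qed

lemma Y1_meas: "(\<lambda>U. Y1 k V U) \<in> borel_measurable (unif_vec n)"
proof -
  have eq: "Y1 k V U = 1 - (\<Prod>j<n. (\<lambda>j u. if cand j (V j) u = Some k then 1 - \<phi> k (V j k) else 1) j (U j))" for U
  proof -
    have e: "(1::real) - (if b then x else 0) = (if b then 1 - x else 1)" for b x by simp
    show ?thesis by (simp only: Y1_def e)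
  qed
  show ?thesis unfolding eq unif_vec_def
    by (rule borel_measurable_diff[OF borel_measurable_const meas_prod_PiM]) (rule cand_meas)
qed

lemma Y2_meas: "(\<lambda>U. Y2 i k V T U) \<in> borel_measurable (unif_vec n)"
proof -
  define g where "g j u = (if j = i then (if cand i (V i) u = Some k then pos (V i k - \<tau> k) else 0)
       else if cand j (V j) u = Some k then 1 - (if T j \<le> T i then \<phi> k (V j k) else 0) else 1)" for j u
  have eq: "Y2 i k V T U = (\<Prod>j<n. g j (U j))" for U
    unfolding Y2_def g_def by (intro prod.cong) auto
  show ?thesis unfolding eq unif_vec_def
  proof (rule meas_prod_PiM)
    fix j show "g j \<in> borel_measurable unif01"
    proof (cases "j = i")
      case True show ?thesis unfolding g_def if_P[OF True] by (rule cand_meas)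
    next
      case False show ?thesis unfolding g_def if_not_P[OF False] by (rule cand_meas)
    qed
  qed
qed

end

lemma split_PiM:
  assumes P: "\<And>j. j \<in> I \<Longrightarrow> prob_space (N j)" and fin: "finite I" and i: "i \<in> I"
    and f: "f \<in> borel_measurable (PiM I N)"
  shows "(\<integral>\<^sup>+x. f x \<partial>PiM I N) = (\<integral>\<^sup>+y. (\<integral>\<^sup>+x. f (x(i := y)) \<partial>PiM (I - {i}) N) \<partial>N i)"
proof -
  let ?N = "\<lambda>j. if j \<in> I then N j else count_space {undefined}"
  interpret product_prob_space ?N I by (rule product_prob_space_ext[OF P])
  have ins: "insert i (I - {i}) = I" using i by auto
  have eqP: "PiM (insert i (I - {i})) ?N = PiM I N" unfolding ins by (rule PiM_ext)
  have eqP': "PiM (I - {i}) ?N = PiM (I - {i}) N" by (rule PiM_cong) auto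
  have f': "f \<in> borel_measurable (PiM (insert i (I - {i})) ?N)" using f eqP by simp
  have "(\<integral>\<^sup>+x. f x \<partial>PiM (insert i (I - {i})) ?N)
      = (\<integral>\<^sup>+y. (\<integral>\<^sup>+x. f (x(i := y)) \<partial>PiM (I - {i}) ?N) \<partial>?N i)"
    by (rule product_nn_integral_insert_rev[OF _ _ f']) (use fin in auto)
  then show ?thesis using i by (simp only: eqP eqP') simp
qed

lemma AE_unif01: "AE t in unif01. 0 \<le> t \<and> t \<le> 1"
  unfolding unif01_def by (rule AE_uniform_measureI) auto

lemma comp_unif: "j < n \<Longrightarrow> (\<lambda>T. T j) \<in> borel_measurable (unif_vec n)"
proof -
  assume j: "j < n"
  have "(\<lambda>T. T j) \<in> measurable (unif_vec n) unif01"
    unfolding unif_vec_def by (rule measurable_component_singleton) (use j in simp)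
  then show ?thesis by (simp add: measurable_cong_sets[OF refl sets_unif01])
qed

lemma le_int_unif:
  assumes "0 \<le> t" "t \<le> 1" "0 \<le> a" "a \<le> 1"
  shows "(\<integral>\<^sup>+s. ennreal (1 - (if s \<le> t then a else 0)) \<partial>unif01) = ennreal (1 - t * a)"
proof -
  interpret U: prob_space unif01 by (rule unif01_prob)
  have pr: "U.prob {s. s \<le> t} = t"
    using emeasure_unif01_le[OF assms(1,2)] assms(1) by (simp add: U.emeasure_eq_measure)
  have "(\<integral>\<^sup>+s. ennreal (1 - (if s \<le> t then a else 0)) \<partial>unif01)
      = (\<integral>\<^sup>+s. ennreal (if s \<in> {s. s \<le> t} then 1 - a else 1) \<partial>unif01)"
    by (intro nn_integral_cong) auto
  also have "\<dots> = ennreal (U.prob {s. s \<le> t} * (1 - a) + (1 - U.prob {s. s \<le> t}) * 1)"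
    by (rule U.nn_integral_if_set) (use assms in auto)
  finally show ?thesis unfolding pr by (simp add: algebra_simps)
qed

context S6t begin

lemma T_const: "(\<integral>\<^sup>+T. ennreal c \<partial>unif_vec n) = ennreal c"
proof -
  interpret prob_space "unif_vec n" by (rule unif_vec_prob)
  show ?thesis by (simp add: emeasure_space_1)
qed

lemma Z2_meas: assumes i: "i < n" shows "(\<lambda>T. Z2 i k V T) \<in> borel_measurable (unif_vec n)"
  unfolding Z2_def
proof (rule borel_measurable_prod)
  fix j assume j: "j \<in> {..<n}"
  have j': "j < n" using j by simp
  note [measurable] = comp_unif[OF i] comp_unif[OF j']
  show "(\<lambda>T. if j = i then pos (V i k - \<tau> k) * q i (V i) k else 1 - (if T j \<le> T i then \<alpha> j k (V j) else 0))
      \<in> borel_measurable (unif_vec n)"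
  proof (cases "j = i")
    case True then show ?thesis by simp
  next
    case False show ?thesis unfolding if_not_P[OF False] by measurable
  qed
qed

definition G :: "nat \<Rightarrow> nat \<Rightarrow> (nat \<Rightarrow> nat \<Rightarrow> real) \<Rightarrow> real \<Rightarrow> real" where
  "G i k V t = pos (V i k - \<tau> k) * q i (V i) k * (\<Prod>j\<in>{..<n} - {i}. 1 - t * \<alpha> j k (V j))"

lemma T_Z2:
  assumes i: "i < n"
  shows "(\<integral>\<^sup>+T. ennreal (Z2 i k V T) \<partial>unif_vec n) = (\<integral>\<^sup>+t. ennreal (G i k V t) \<partial>unif01)"
proof -
  let ?J = "{..<n} - {i}"
  let ?c = "pos (V i k - \<tau> k) * q i (V i) k"
  have cnn: "0 \<le> ?c" using q_nonneg by simp
  have "(\<integral>\<^sup>+T. ennreal (Z2 i k V T) \<partial>unif_vec n)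
      = (\<integral>\<^sup>+t. (\<integral>\<^sup>+x. ennreal (Z2 i k V (x(i := t))) \<partial>PiM ?J (\<lambda>_. unif01)) \<partial>unif01)"
    unfolding unif_vec_def
    by (rule split_PiM[OF unif01_prob]) (use i Z2_meas[OF i, unfolded unif_vec_def] in auto)
  also have "\<dots> = (\<integral>\<^sup>+t. ennreal (G i k V t) \<partial>unif01)"
  proof (rule nn_integral_cong_AE)
    show "AE t in unif01. (\<integral>\<^sup>+x. ennreal (Z2 i k V (x(i := t))) \<partial>PiM ?J (\<lambda>_. unif01)) = ennreal (G i k V t)"
      using AE_unif01
    proof (rule AE_mp, intro AE_I2 impI)
      fix t :: real assume t: "0 \<le> t \<and> t \<le> 1"
      have eqZ: "Z2 i k V (x(i := t)) = ?c * (\<Prod>j\<in>?J. 1 - (if x j \<le> t then \<alpha> j k (V j) else 0))" for x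
      proof -
        have "Z2 i k V (x(i := t)) = ?c * (\<Prod>j\<in>?J. if j = i then ?c
            else 1 - (if (x(i := t)) j \<le> (x(i := t)) i then \<alpha> j k (V j) else 0))"
          unfolding Z2_def using i by (subst prod.remove[of _ i]) auto
        also have "(\<Prod>j\<in>?J. if j = i then ?c else 1 - (if (x(i := t)) j \<le> (x(i := t)) i then \<alpha> j k (V j) else 0))
            = (\<Prod>j\<in>?J. 1 - (if x j \<le> t then \<alpha> j k (V j) else 0))"
          by (intro prod.cong) auto
        finally show ?thesis .
      qed
      have "(\<integral>\<^sup>+x. ennreal (Z2 i k V (x(i := t))) \<partial>PiM ?J (\<lambda>_. unif01))
          = (\<integral>\<^sup>+x. ennreal ?c * ennreal (\<Prod>j\<in>?J. 1 - (if x j \<le> t then \<alpha> j k (V j) else 0)) \<partial>PiM ?J (\<lambda>_. unif01))"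
        unfolding eqZ by (intro nn_integral_cong) (simp add: ennreal_mult' cnn)
      also have "\<dots> = ennreal ?c * (\<integral>\<^sup>+x. ennreal (\<Prod>j\<in>?J. 1 - (if x j \<le> t then \<alpha> j k (V j) else 0)) \<partial>PiM ?J (\<lambda>_. unif01))"
      proof (rule nn_integral_cmult)
        have "(\<lambda>x. \<Prod>j\<in>?J. (\<lambda>j s. 1 - (if s \<le> t then \<alpha> j k (V j) else 0)) j (x j)) \<in> borel_measurable (PiM ?J (\<lambda>_. unif01))"
          by (rule meas_prod_PiM) measurable
        then show "(\<lambda>x. ennreal (\<Prod>j\<in>?J. 1 - (if x j \<le> t then \<alpha> j k (V j) else 0))) \<in> borel_measurable (PiM ?J (\<lambda>_. unif01))"
          by simp
      qed
      also have "(\<integral>\<^sup>+x. ennreal (\<Prod>j\<in>?J. 1 - (if x j \<le> t then \<alpha> j k (V j) else 0)) \<partial>PiM ?J (\<lambda>_. unif01))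
          = ennreal (\<Prod>j\<in>?J. 1 - t * \<alpha> j k (V j))"
      proof (rule nn_integral_PiM_prod_real[where g="\<lambda>j s. 1 - (if s \<le> t then \<alpha> j k (V j) else 0)"])
        fix j assume "j \<in> ?J"
        show "(\<integral>\<^sup>+s. ennreal (1 - (if s \<le> t then \<alpha> j k (V j) else 0)) \<partial>unif01) = ennreal (1 - t * \<alpha> j k (V j))"
          using t by (intro le_int_unif alpha_nn alpha_le1) auto
      next
        fix j assume "j \<in> ?J"
        show "(\<lambda>s. 1 - (if s \<le> t then \<alpha> j k (V j) else 0)) \<in> borel_measurable unif01" by measurable
      next
        fix j s assume "j \<in> ?J"
        show "0 \<le> 1 - (if s \<le> t then \<alpha> j k (V j) else 0)" using alpha_le1[of j k "V j"] by simp
      next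
        fix j assume "j \<in> ?J"
        show "0 \<le> 1 - t * \<alpha> j k (V j)"
          using t alpha_le1[of j k "V j"] alpha_nn[of j k "V j"] mult_le_one[of t "\<alpha> j k (V j)"] by simp
      next
        show "finite ?J" by simp
      next
        fix j show "prob_space unif01" by (rule unif01_prob)
      qed
      also have "ennreal ?c * ennreal (\<Prod>j\<in>?J. 1 - t * \<alpha> j k (V j)) = ennreal (G i k V t)"
        unfolding G_def by (simp add: ennreal_mult'[symmetric] cnn)
      finally show "(\<integral>\<^sup>+x. ennreal (Z2 i k V (x(i := t))) \<partial>PiM ?J (\<lambda>_. unif01)) = ennreal (G i k V t)" .
    qed
  qed
  finally show ?thesis .
qed

end

context S6t begin

lemma comp_meas_D: "j < n \<Longrightarrow> k < m \<Longrightarrow> (\<lambda>v. v k) \<in> borel_measurable (D j)"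
  using comp_meas by (simp add: measurable_cong_sets[OF D_sets refl])

lemma phi_meas: "j < n \<Longrightarrow> k < m \<Longrightarrow> (\<lambda>v. \<phi> k (v k)) \<in> borel_measurable (D j)"
  unfolding \<phi>_def using comp_meas_D[of j k] by measurable

lemma alpha_meas: "j < n \<Longrightarrow> k < m \<Longrightarrow> \<alpha> j k \<in> borel_measurable (D j)"
  unfolding \<alpha>_def[abs_def] using q_meas[of j k] phi_meas[of j k] by measurable

lemma alpha_int: assumes "j < n" "k < m" shows "integrable (D j) (\<alpha> j k)"
proof -
  interpret prob_space "D j" by (rule D_prob[OF assms(1)])
  show ?thesis
    by (rule integrable_const_bound[where B=1]) (use alpha_meas[OF assms] alpha_nn alpha_le1 in auto)
qed

definition a :: "nat \<Rightarrow> nat \<Rightarrow> real" where "a j k = integral\<^sup>L (D j) (\<alpha> j k)"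

lemma a_nn: "j < n \<Longrightarrow> k < m \<Longrightarrow> 0 \<le> a j k"
  unfolding a_def by (rule integral_nonneg_AE) (simp add: alpha_nn)

lemma a_le1: assumes "j < n" "k < m" shows "a j k \<le> 1"
proof -
  interpret prob_space "D j" by (rule D_prob[OF assms(1)])
  have "a j k \<le> integral\<^sup>L (D j) (\<lambda>_. 1)"
    unfolding a_def by (rule integral_mono) (use alpha_int[OF assms] alpha_le1 in auto)
  then show ?thesis by (simp add: prob_space)
qed

lemma int_one_minus:
  assumes j: "j < n" and k: "k < m" and t: "0 \<le> t" "t \<le> 1"
  shows "(\<integral>\<^sup>+v. ennreal (1 - t * \<alpha> j k v) \<partial>D j) = ennreal (1 - t * a j k)"
proof -
  interpret prob_space "D j" by (rule D_prob[OF j])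
  have I: "integrable (D j) (\<lambda>v. 1 - t * \<alpha> j k v)"
    using alpha_int[OF j k] by auto
  have "(\<integral>\<^sup>+v. ennreal (1 - t * \<alpha> j k v) \<partial>D j) = ennreal (integral\<^sup>L (D j) (\<lambda>v. 1 - t * \<alpha> j k v))"
  proof (rule nn_integral_eq_integral[OF I])
    show "AE x in D j. 0 \<le> 1 - t * \<alpha> j k x"
      using t alpha_le1 alpha_nn by (intro AE_I2) (simp add: mult_le_one)
  qed
  also have "integral\<^sup>L (D j) (\<lambda>v. 1 - t * \<alpha> j k v) = 1 - t * a j k"
  proof -
    have "integral\<^sup>L (D j) (\<lambda>v. 1 - t * \<alpha> j k v) = integral\<^sup>L (D j) (\<lambda>v. 1) - integral\<^sup>L (D j) (\<lambda>v. t * \<alpha> j k v)"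
      using Bochner_Integration.integral_diff[of "D j" "\<lambda>v. 1" "\<lambda>v. t * \<alpha> j k v"] alpha_int[OF j k] by simp
    also have "\<dots> = 1 - t * a j k" unfolding a_def by (simp add: prob_space)
    finally show ?thesis .
  qed
  finally show ?thesis .
qed

lemma V_Z1:
  assumes k: "k < m"
  shows "(\<integral>\<^sup>+V. ennreal (Z1 k V) \<partial>P) = ennreal (1 - (\<Prod>j<n. 1 - a j k))"
  unfolding Z1_def
proof (rule nn_integral_PiM_one_minus_prod[where g="\<lambda>j v. 1 - \<alpha> j k v"])
  fix j assume "j \<in> {..<n}"
  then have j: "j < n" by simp
  show "prob_space (D j)" by (rule D_prob[OF j])
  show "(\<lambda>v. 1 - \<alpha> j k v) \<in> borel_measurable (D j)" using alpha_meas[OF j k] by measurable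
  show "(\<integral>\<^sup>+v. ennreal (1 - \<alpha> j k v) \<partial>D j) = ennreal (1 - a j k)"
    using int_one_minus[OF j k, of 1] by simp
  show "0 \<le> 1 - a j k" using a_le1[OF j k] by simp
  show "1 - a j k \<le> 1" using a_nn[OF j k] by simp
next
  fix j x show "0 \<le> 1 - \<alpha> j k x" using alpha_le1 by simp
next
  fix j x show "1 - \<alpha> j k x \<le> 1" using alpha_nn by simp
qed simp

lemma G_meas:
  assumes i: "i < n" and k: "k < m"
  shows "(\<lambda>(V, t). ennreal (G i k V t)) \<in> borel_measurable (P \<Otimes>\<^sub>M unif01)"
proof -
  have compj: "(\<lambda>x. fst x j) \<in> measurable (P \<Otimes>\<^sub>M unif01) (D j)" if "j < n" for j
    by (rule measurable_compose[OF measurable_fst measurable_component_singleton]) (use that in simp)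
  have sndm: "snd \<in> borel_measurable (P \<Otimes>\<^sub>M unif01)"
    using measurable_snd[of P unif01] by (simp add: measurable_cong_sets[OF refl sets_unif01])
  have pm: "(\<lambda>x. \<Prod>j\<in>{..<n} - {i}. 1 - snd x * \<alpha> j k (fst x j)) \<in> borel_measurable (P \<Otimes>\<^sub>M unif01)"
  proof (rule borel_measurable_prod)
    fix j assume "j \<in> {..<n} - {i}"
    then have j: "j < n" by simp
    have "(\<lambda>x. \<alpha> j k (fst x j)) \<in> borel_measurable (P \<Otimes>\<^sub>M unif01)"
      by (rule measurable_compose[OF compj[OF j] alpha_meas[OF j k]])
    then show "(\<lambda>x. 1 - snd x * \<alpha> j k (fst x j)) \<in> borel_measurable (P \<Otimes>\<^sub>M unif01)"
      using sndm by measurable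
  qed
  have p1: "(\<lambda>x. pos (fst x i k - \<tau> k)) \<in> borel_measurable (P \<Otimes>\<^sub>M unif01)"
  proof -
    have "(\<lambda>x. fst x i k) \<in> borel_measurable (P \<Otimes>\<^sub>M unif01)"
      by (rule measurable_compose[OF compj[OF i] comp_meas_D[OF i k]])
    then show ?thesis unfolding pos_def by measurable
  qed
  have p2: "(\<lambda>x. q i (fst x i) k) \<in> borel_measurable (P \<Otimes>\<^sub>M unif01)"
    by (rule measurable_compose[OF compj[OF i] q_meas[OF i]])
  have "(\<lambda>x. ennreal (pos (fst x i k - \<tau> k) * q i (fst x i) k * (\<Prod>j\<in>{..<n} - {i}. 1 - snd x * \<alpha> j k (fst x j))))
      \<in> borel_measurable (P \<Otimes>\<^sub>M unif01)"
    using p1 p2 pm by measurable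
  then show ?thesis unfolding G_def by (simp add: case_prod_beta')
qed

lemma V_G:
  assumes i: "i < n" and k: "k < m"
  shows "(\<integral>\<^sup>+V. (\<integral>\<^sup>+t. ennreal (G i k V t) \<partial>unif01) \<partial>P)
    = (\<integral>\<^sup>+t. (\<integral>\<^sup>+y. ennreal (pos (y k - \<tau> k) * q i y k) \<partial>D i) * ennreal (\<Prod>j\<in>{..<n} - {i}. 1 - t * a j k) \<partial>unif01)"
proof -
  interpret PP: prob_space P by (rule P_prob)
  interpret UU: prob_space unif01 by (rule unif01_prob)
  interpret pair_sigma_finite P unif01 by unfold_locales
  have "(\<integral>\<^sup>+V. (\<integral>\<^sup>+t. ennreal (G i k V t) \<partial>unif01) \<partial>P) = (\<integral>\<^sup>+t. (\<integral>\<^sup>+V. ennreal (G i k V t) \<partial>P) \<partial>unif01)"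
    by (rule Fubini'[symmetric]) (use G_meas[OF i k] in simp)
  also have "\<dots> = (\<integral>\<^sup>+t. (\<integral>\<^sup>+y. ennreal (pos (y k - \<tau> k) * q i y k) \<partial>D i) * ennreal (\<Prod>j\<in>{..<n} - {i}. 1 - t * a j k) \<partial>unif01)"
  proof (rule nn_integral_cong_AE)
    show "AE t in unif01. (\<integral>\<^sup>+V. ennreal (G i k V t) \<partial>P) =
        (\<integral>\<^sup>+y. ennreal (pos (y k - \<tau> k) * q i y k) \<partial>D i) * ennreal (\<Prod>j\<in>{..<n} - {i}. 1 - t * a j k)"
      using AE_unif01
    proof (rule AE_mp, intro AE_I2 impI)
      fix t :: real assume t: "0 \<le> t \<and> t \<le> 1"
      define h where "h j v = (if j = i then ennreal (pos (v k - \<tau> k) * q i v k) else ennreal (1 - t * \<alpha> j k v))" for j v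
      have Geq: "ennreal (G i k V t) = (\<Prod>j<n. h j (V j))" for V
      proof -
        have nn: "0 \<le> 1 - t * \<alpha> j k (V j)" for j
          using t alpha_le1[of j k "V j"] alpha_nn[of j k "V j"] by (simp add: mult_le_one)
        have "(\<Prod>j<n. h j (V j)) = h i (V i) * (\<Prod>j\<in>{..<n} - {i}. h j (V j))"
          using i by (subst prod.remove[of _ i]) auto
        also have "(\<Prod>j\<in>{..<n} - {i}. h j (V j)) = (\<Prod>j\<in>{..<n} - {i}. ennreal (1 - t * \<alpha> j k (V j)))"
          unfolding h_def by (intro prod.cong) auto
        also have "\<dots> = ennreal (\<Prod>j\<in>{..<n} - {i}. 1 - t * \<alpha> j k (V j))"
          by (rule prod_ennreal) (rule nn)
        finally show ?thesis unfolding G_def h_def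
          by (simp add: ennreal_mult' q_nonneg)
      qed
      have "(\<integral>\<^sup>+V. ennreal (G i k V t) \<partial>P) = (\<integral>\<^sup>+V. (\<Prod>j<n. h j (V j)) \<partial>P)"
        by (simp add: Geq)
      also have "\<dots> = (\<Prod>j<n. \<integral>\<^sup>+v. h j v \<partial>D j)"
      proof (rule nn_integral_PiM_prod)
        fix j assume "j \<in> {..<n}"
        then have j: "j < n" by simp
        show "prob_space (D j)" by (rule D_prob[OF j])
        show "h j \<in> borel_measurable (D j)"
        proof (cases "j = i")
          case True
          have "(\<lambda>v. ennreal (pos (v k - \<tau> k) * q i v k)) \<in> borel_measurable (D i)"
            using comp_meas_D[OF i k] q_meas[OF i, of k] unfolding pos_def by measurable
          then show ?thesis unfolding h_def[abs_def] using True by simp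
        next
          case False
          have "(\<lambda>v. ennreal (1 - t * \<alpha> j k v)) \<in> borel_measurable (D j)"
            using alpha_meas[OF j k] by measurable
          then show ?thesis unfolding h_def[abs_def] using False by simp
        qed
      qed simp
      also have "\<dots> = (\<integral>\<^sup>+v. h i v \<partial>D i) * (\<Prod>j\<in>{..<n} - {i}. \<integral>\<^sup>+v. h j v \<partial>D j)"
        using i by (subst prod.remove[of _ i]) auto
      also have "(\<Prod>j\<in>{..<n} - {i}. \<integral>\<^sup>+v. h j v \<partial>D j) = (\<Prod>j\<in>{..<n} - {i}. ennreal (1 - t * a j k))"
      proof (intro prod.cong refl)
        fix j assume "j \<in> {..<n} - {i}"
        then have j: "j < n" and ji: "j \<noteq> i" by auto
        show "(\<integral>\<^sup>+v. h j v \<partial>D j) = ennreal (1 - t * a j k)"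
          unfolding h_def using ji int_one_minus[OF j k] t by simp
      qed
      also have "\<dots> = ennreal (\<Prod>j\<in>{..<n} - {i}. 1 - t * a j k)"
      proof (rule prod_ennreal)
        fix j assume "j \<in> {..<n} - {i}"
        then have j: "j < n" by simp
        show "0 \<le> 1 - t * a j k" using t a_le1[OF j k] a_nn[OF j k] by (simp add: mult_le_one)
      qed
      finally show "(\<integral>\<^sup>+V. ennreal (G i k V t) \<partial>P) =
        (\<integral>\<^sup>+y. ennreal (pos (y k - \<tau> k) * q i y k) \<partial>D i) * ennreal (\<Prod>j\<in>{..<n} - {i}. 1 - t * a j k)"
        unfolding h_def by simp
    qed
  qed
  finally show ?thesis .
qed

end

lemma nn_integral_sum2:
  fixes f :: "'k \<Rightarrow> 'a \<Rightarrow> ennreal" and g :: "'k \<Rightarrow> 'i \<Rightarrow> 'a \<Rightarrow> ennreal"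
  assumes f: "\<And>k. k \<in> K \<Longrightarrow> f k \<in> borel_measurable M"
    and g: "\<And>k i. k \<in> K \<Longrightarrow> i \<in> I \<Longrightarrow> g k i \<in> borel_measurable M"
  shows "(\<integral>\<^sup>+x. (\<Sum>k\<in>K. c k * f k x) + (\<Sum>k\<in>K. \<Sum>i\<in>I. g k i x) \<partial>M)
    = (\<Sum>k\<in>K. c k * integral\<^sup>N M (f k)) + (\<Sum>k\<in>K. \<Sum>i\<in>I. integral\<^sup>N M (g k i))"
proof -
  have m1: "(\<lambda>x. \<Sum>k\<in>K. c k * f k x) \<in> borel_measurable M"
    by (intro borel_measurable_sum borel_measurable_times_ennreal borel_measurable_const f)
  have m2: "(\<lambda>x. \<Sum>k\<in>K. \<Sum>i\<in>I. g k i x) \<in> borel_measurable M"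
    by (intro borel_measurable_sum g)
  have "(\<integral>\<^sup>+x. (\<Sum>k\<in>K. c k * f k x) + (\<Sum>k\<in>K. \<Sum>i\<in>I. g k i x) \<partial>M)
      = (\<integral>\<^sup>+x. (\<Sum>k\<in>K. c k * f k x) \<partial>M) + (\<integral>\<^sup>+x. (\<Sum>k\<in>K. \<Sum>i\<in>I. g k i x) \<partial>M)"
    by (rule nn_integral_add[OF m1 m2])
  also have "(\<integral>\<^sup>+x. (\<Sum>k\<in>K. c k * f k x) \<partial>M) = (\<Sum>k\<in>K. \<integral>\<^sup>+x. c k * f k x \<partial>M)"
    by (rule nn_integral_sum) (intro borel_measurable_times_ennreal borel_measurable_const f)
  also have "\<dots> = (\<Sum>k\<in>K. c k * integral\<^sup>N M (f k))"
    by (intro sum.cong refl nn_integral_cmult f)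
  also have "(\<integral>\<^sup>+x. (\<Sum>k\<in>K. \<Sum>i\<in>I. g k i x) \<partial>M) = (\<Sum>k\<in>K. \<integral>\<^sup>+x. (\<Sum>i\<in>I. g k i x) \<partial>M)"
    by (rule nn_integral_sum) (intro borel_measurable_sum g)
  also have "\<dots> = (\<Sum>k\<in>K. \<Sum>i\<in>I. integral\<^sup>N M (g k i))"
    by (intro sum.cong refl nn_integral_sum g)
  finally show ?thesis .
qed

context S6t begin

definition R :: "nat \<Rightarrow> nat \<Rightarrow> ennreal" where
  "R i k = (\<integral>\<^sup>+y. ennreal (pos (y k - \<tau> k) * q i y k) \<partial>D i)"

lemma main_lb:
  "(\<Sum>k<m. ennreal (\<tau> k) * ennreal (1 - (\<Prod>j<n. 1 - a j k))) +
   (\<Sum>k<m. \<Sum>i<n. \<integral>\<^sup>+t. R i k * ennreal (\<Prod>j\<in>{..<n} - {i}. 1 - t * a j k) \<partial>unif01)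
   \<le> (\<integral>\<^sup>+ V. (\<integral>\<^sup>+ T. (\<integral>\<^sup>+ U. (\<integral>\<^sup>+ W.
          ennreal (alg_welfare n m D M \<tau> \<theta> V T U W) \<partial>unif_vec n) \<partial>unif_vec n) \<partial>unif_vec n) \<partial>P)"
  (is "?lhs \<le> ?rhs")
proof -
  let ?L = "\<lambda>V T U W. (\<Sum>k<m. ennreal (\<tau> k) * ennreal (F1 k V U W)) + (\<Sum>k<m. \<Sum>i<n. ennreal (F2 i k V T U W))"
  have pw: "?L V T U W \<le> ennreal (alg_welfare n m D M \<tau> \<theta> V T U W)" for V T U W
  proof -
    have "?L V T U W = ennreal ((\<Sum>k<m. \<tau> k * F1 k V U W) + (\<Sum>k<m. \<Sum>i<n. F2 i k V T U W))"
      using tau_nn F1_nonneg F2_nonneg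
      by (simp add: ennreal_plus[symmetric] ennreal_mult[symmetric] sum_nonneg del: ennreal_plus)
    also have "\<dots> \<le> ennreal (alg_welfare n m D M \<tau> \<theta> V T U W)"
      by (rule ennreal_leI) (rule alg_lb)
    finally show ?thesis .
  qed
  have step1: "(\<integral>\<^sup>+ V. (\<integral>\<^sup>+ T. (\<integral>\<^sup>+ U. (\<integral>\<^sup>+ W. ?L V T U W \<partial>unif_vec n) \<partial>unif_vec n) \<partial>unif_vec n) \<partial>P) \<le> ?rhs"
    by (intro nn_integral_mono pw)
  have lvW: "(\<integral>\<^sup>+ W. ?L V T U W \<partial>unif_vec n) =
      (\<Sum>k<m. ennreal (\<tau> k) * ennreal (Y1 k V U)) + (\<Sum>k<m. \<Sum>i<n. ennreal (Y2 i k V T U))" for V T U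
    by (subst nn_integral_sum2) (use F1_meas F2_meas in \<open>simp_all add: W_F1 W_F2\<close>)
  have lvU: "(\<integral>\<^sup>+ U. (\<Sum>k<m. ennreal (\<tau> k) * ennreal (Y1 k V U)) + (\<Sum>k<m. \<Sum>i<n. ennreal (Y2 i k V T U)) \<partial>unif_vec n) =
      (\<Sum>k<m. ennreal (\<tau> k) * ennreal (Z1 k V)) + (\<Sum>k<m. \<Sum>i<n. ennreal (Z2 i k V T))"
    if V: "V \<in> space P" for V T
    by (subst nn_integral_sum2) (use Y1_meas Y2_meas in \<open>simp_all add: U_Y1[OF V] U_Y2[OF V]\<close>)
  have lvT: "(\<integral>\<^sup>+ T. (\<Sum>k<m. ennreal (\<tau> k) * ennreal (Z1 k V)) + (\<Sum>k<m. \<Sum>i<n. ennreal (Z2 i k V T)) \<partial>unif_vec n) =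
      (\<Sum>k<m. ennreal (\<tau> k) * ennreal (Z1 k V)) + (\<Sum>k<m. \<Sum>i<n. \<integral>\<^sup>+t. ennreal (G i k V t) \<partial>unif01)" for V
    by (subst nn_integral_sum2[where f="\<lambda>k T. ennreal (Z1 k V)"]) (use Z2_meas prob_space.emeasure_space_1[OF unif_vec_prob] in \<open>simp_all add: T_const T_Z2\<close>)
  have Z1m: "(\<lambda>V. ennreal (Z1 k V)) \<in> borel_measurable P" if k: "k < m" for k
  proof -
    have "(\<lambda>V. \<Prod>j<n. (\<lambda>j v. 1 - \<alpha> j k v) j (V j)) \<in> borel_measurable P"
    proof (rule meas_prod_PiM)
      fix j assume "j \<in> {..<n}" then have j: "j < n" by simp
      show "(\<lambda>v. 1 - \<alpha> j k v) \<in> borel_measurable (D j)" using alpha_meas[OF j k] by measurable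
    qed
    then show ?thesis unfolding Z1_def by measurable
  qed
  have Gm: "(\<lambda>V. \<integral>\<^sup>+t. ennreal (G i k V t) \<partial>unif01) \<in> borel_measurable P" if "i < n" "k < m" for i k
  proof -
    interpret UU: prob_space unif01 by (rule unif01_prob)
    show ?thesis by (rule UU.borel_measurable_nn_integral) (use G_meas[OF that] in simp)
  qed
  have lvV: "(\<integral>\<^sup>+ V. (\<Sum>k<m. ennreal (\<tau> k) * ennreal (Z1 k V)) + (\<Sum>k<m. \<Sum>i<n. \<integral>\<^sup>+t. ennreal (G i k V t) \<partial>unif01) \<partial>P) = ?lhs"
    by (subst nn_integral_sum2) (use Z1m Gm in \<open>simp_all add: V_Z1 V_G R_def\<close>)
  have "?lhs = (\<integral>\<^sup>+ V. (\<integral>\<^sup>+ T. (\<integral>\<^sup>+ U. (\<integral>\<^sup>+ W. ?L V T U W \<partial>unif_vec n) \<partial>unif_vec n) \<partial>unif_vec n) \<partial>P)"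
  proof -
    have "(\<integral>\<^sup>+ V. (\<integral>\<^sup>+ T. (\<integral>\<^sup>+ U. (\<integral>\<^sup>+ W. ?L V T U W \<partial>unif_vec n) \<partial>unif_vec n) \<partial>unif_vec n) \<partial>P)
        = (\<integral>\<^sup>+ V. (\<Sum>k<m. ennreal (\<tau> k) * ennreal (Z1 k V)) + (\<Sum>k<m. \<Sum>i<n. \<integral>\<^sup>+t. ennreal (G i k V t) \<partial>unif01) \<partial>P)"
      by (intro nn_integral_cong) (simp add: lvW lvU lvT)
    then show ?thesis using lvV by simp
  qed
  then show ?thesis using step1 by simp
qed

end

lemma powr_le_lin:
  fixes x t :: real
  assumes "0 < x" "0 \<le> t" "t \<le> 1"
  shows "x powr t \<le> 1 - t + t * x"
proof -
  have "exp ((1 - t) *\<^sub>R 0 + t *\<^sub>R ln x) \<le> (1 - t) * exp 0 + t * exp (ln x)"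
    by (rule convex_onD[OF exp_convex]) (use assms in auto)
  then show ?thesis using assms by (simp add: powr_def mult.commute)
qed

lemma prod_lb:
  fixes a :: "nat \<Rightarrow> real"
  assumes fin: "finite J" and a: "\<And>j. j \<in> J \<Longrightarrow> 0 \<le> a j \<and> a j \<le> 1"
    and P: "exp (-1) \<le> (\<Prod>j\<in>J. 1 - a j)" and t: "0 \<le> t" "t \<le> 1"
  shows "exp (-t) \<le> (\<Prod>j\<in>J. 1 - t * a j)"
proof -
  have lt: "a j < 1" if j: "j \<in> J" for j
  proof (rule ccontr)
    assume "\<not> a j < 1"
    then have "a j = 1" using a[OF j] by simp
    then have "(\<Prod>j\<in>J. 1 - a j) = 0" using fin j by (intro prod_zero) auto
    then show False using P by (simp add: not_le[symmetric])
  qed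
  have "exp (-t) = exp (-1) powr t" by (simp add: powr_def)
  also have "\<dots> \<le> (\<Prod>j\<in>J. 1 - a j) powr t" by (rule powr_mono2) (use t P in auto)
  also have "\<dots> = (\<Prod>j\<in>J. (1 - a j) powr t)" by (rule prod_powr_distrib)
  also have "\<dots> \<le> (\<Prod>j\<in>J. 1 - t * a j)"
  proof (rule prod_mono)
    fix j assume j: "j \<in> J"
    have "(1 - a j) powr t \<le> 1 - t + t * (1 - a j)" by (rule powr_le_lin) (use lt[OF j] t in auto)
    then show "0 \<le> (1 - a j) powr t \<and> (1 - a j) powr t \<le> 1 - t * a j" by (simp add: algebra_simps)
  qed
  finally show ?thesis .
qed

lemma exp_has_integral: "((\<lambda>t. exp (-t)) has_integral (1 - exp (-1))) {0..1::real}"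
proof -
  have "((\<lambda>t. exp (-t)) has_integral ((\<lambda>t. - exp (-t)) 1 - (\<lambda>t. - exp (-t)) 0)) {0..1::real}"
  proof (rule fundamental_theorem_of_calculus)
    fix x :: real assume "x \<in> {0..1}"
    have "((\<lambda>t. - exp (-t)) has_real_derivative exp (-x)) (at x within {0..1})"
      by (auto intro!: derivative_eq_intros)
    then show "((\<lambda>t. - exp (-t)) has_vector_derivative exp (-x)) (at x within {0..1})"
      by (simp add: has_real_derivative_iff_has_vector_derivative)
  qed simp
  then show ?thesis by simp
qed

lemma int_exp_unif: "(\<integral>\<^sup>+t. ennreal (exp (-t)) \<partial>unif01) = ennreal (1 - exp (-1))"
proof -
  have "(\<integral>\<^sup>+t. ennreal (exp (-t)) \<partial>unif01) = (\<integral>\<^sup>+t. ennreal (exp (-t)) * indicator {0..1} t \<partial>lborel) / emeasure lborel {0..1::real}"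
    unfolding unif01_def by (rule nn_integral_uniform_measure) auto
  also have "(\<integral>\<^sup>+t. ennreal (exp (-t)) * indicator {0..1} t \<partial>lborel) = (\<integral>\<^sup>+t. ennreal (indicator {0..1} t * exp (-t)) \<partial>lborel)"
    by (intro nn_integral_cong) (simp split: split_indicator)
  also have "\<dots> = ennreal (1 - exp (-1))"
    by (rule nn_integral_has_integral_lebesgue) (use exp_has_integral in auto)
  finally show ?thesis by simp
qed

context S6t begin

lemma final_k:
  assumes k: "k < m" and Pge: "exp (-1) \<le> (\<Prod>j<n. 1 - a j k)"
    and Ple: "\<tau> k = 0 \<or> (\<Prod>j<n. 1 - a j k) \<le> exp (-1)"
  shows "ennreal (1 - exp (-1)) * (\<Sum>i<n. \<integral>\<^sup>+y. ennreal (y k) * ennreal (q i y k) \<partial>D i)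
    \<le> ennreal (\<tau> k) * ennreal (1 - (\<Prod>j<n. 1 - a j k)) +
      (\<Sum>i<n. \<integral>\<^sup>+t. R i k * ennreal (\<Prod>j\<in>{..<n} - {i}. 1 - t * a j k) \<partial>unif01)"
proof -
  let ?e = "ennreal (1 - exp (-1))"
  have an: "\<And>j. j \<in> {..<n} \<Longrightarrow> 0 \<le> a j k \<and> a j k \<le> 1" using a_nn a_le1 k by auto
  have A: "?e * R i k \<le> (\<integral>\<^sup>+t. R i k * ennreal (\<Prod>j\<in>{..<n} - {i}. 1 - t * a j k) \<partial>unif01)" if i: "i < n" for i
  proof -
    have PJ: "exp (-1) \<le> (\<Prod>j\<in>{..<n} - {i}. 1 - a j k)"
    proof -
      have "(\<Prod>j<n. 1 - a j k) = (1 - a i k) * (\<Prod>j\<in>{..<n} - {i}. 1 - a j k)"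
        using i by (subst prod.remove[of _ i]) auto
      also have "\<dots> \<le> (\<Prod>j\<in>{..<n} - {i}. 1 - a j k)"
        using an i by (intro mult_left_le_one_le prod_nonneg) auto
      finally show ?thesis using Pge by simp
    qed
    have "?e * R i k = R i k * (\<integral>\<^sup>+t. ennreal (exp (-t)) \<partial>unif01)" by (simp add: int_exp_unif mult.commute)
    also have "\<dots> = (\<integral>\<^sup>+t. R i k * ennreal (exp (-t)) \<partial>unif01)"
      by (rule nn_integral_cmult[symmetric]) measurable
    also have "\<dots> \<le> (\<integral>\<^sup>+t. R i k * ennreal (\<Prod>j\<in>{..<n} - {i}. 1 - t * a j k) \<partial>unif01)"
    proof (rule nn_integral_mono_AE)
      show "AE t in unif01. R i k * ennreal (exp (-t)) \<le> R i k * ennreal (\<Prod>j\<in>{..<n} - {i}. 1 - t * a j k)"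
        using AE_unif01
      proof (rule AE_mp, intro AE_I2 impI)
        fix t :: real assume t: "0 \<le> t \<and> t \<le> 1"
        have "exp (-t) \<le> (\<Prod>j\<in>{..<n} - {i}. 1 - t * a j k)"
          by (rule prod_lb[OF _ _ PJ]) (use an t in auto)
        then show "R i k * ennreal (exp (-t)) \<le> R i k * ennreal (\<Prod>j\<in>{..<n} - {i}. 1 - t * a j k)"
          by (intro mult_left_mono ennreal_leI) auto
      qed
    qed
    finally show ?thesis .
  qed
  have B: "?e * ennreal (\<tau> k) \<le> ennreal (\<tau> k) * ennreal (1 - (\<Prod>j<n. 1 - a j k))"
    using Ple
  proof
    assume "\<tau> k = 0" then show ?thesis by simp
  next
    assume h: "(\<Prod>j<n. 1 - a j k) \<le> exp (-1)"
    have "?e \<le> ennreal (1 - (\<Prod>j<n. 1 - a j k))" using h by (intro ennreal_leI) simp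
    then show ?thesis by (simp add: mult.commute mult_left_mono)
  qed
  have C: "(\<integral>\<^sup>+y. ennreal (y k) * ennreal (q i y k) \<partial>D i)
      \<le> ennreal (\<tau> k) * (\<integral>\<^sup>+y. ennreal (q i y k) \<partial>D i) + R i k" if i: "i < n" for i
  proof -
    have qm: "(\<lambda>y. ennreal (q i y k)) \<in> borel_measurable (D i)" using q_meas[OF i, of k] by measurable
    have pm: "(\<lambda>y. ennreal (pos (y k - \<tau> k) * q i y k)) \<in> borel_measurable (D i)"
      using q_meas[OF i, of k] comp_meas_D[OF i k] unfolding pos_def by measurable
    have "(\<integral>\<^sup>+y. ennreal (y k) * ennreal (q i y k) \<partial>D i)
        \<le> (\<integral>\<^sup>+y. ennreal (\<tau> k) * ennreal (q i y k) + ennreal (pos (y k - \<tau> k) * q i y k) \<partial>D i)"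
    proof (rule nn_integral_mono)
      fix y
      have "y k \<le> \<tau> k + pos (y k - \<tau> k)" unfolding pos_def by simp
      then have "ennreal (y k * q i y k) \<le> ennreal (\<tau> k * q i y k + pos (y k - \<tau> k) * q i y k)"
        using q_nonneg[of i y k] by (intro ennreal_leI) (simp add: distrib_right[symmetric] mult_right_mono)
      then show "ennreal (y k) * ennreal (q i y k) \<le> ennreal (\<tau> k) * ennreal (q i y k) + ennreal (pos (y k - \<tau> k) * q i y k)"
        using q_nonneg[of i y k] tau_nn[of k]
        by (simp add: ennreal_mult''[symmetric] ennreal_mult'[symmetric] ennreal_plus[symmetric] del: ennreal_plus)
    qed
    also have "\<dots> = ennreal (\<tau> k) * (\<integral>\<^sup>+y. ennreal (q i y k) \<partial>D i) + R i k"
      unfolding R_def using qm pm by (simp add: nn_integral_add nn_integral_cmult)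
    finally show ?thesis .
  qed
  have "?e * (\<Sum>i<n. \<integral>\<^sup>+y. ennreal (y k) * ennreal (q i y k) \<partial>D i)
      \<le> ?e * (\<Sum>i<n. ennreal (\<tau> k) * (\<integral>\<^sup>+y. ennreal (q i y k) \<partial>D i) + R i k)"
    by (intro mult_left_mono sum_mono C) auto
  also have "\<dots> = ?e * (ennreal (\<tau> k) * (\<Sum>i<n. \<integral>\<^sup>+y. ennreal (q i y k) \<partial>D i)) + (\<Sum>i<n. ?e * R i k)"
    by (simp add: sum.distrib sum_distrib_left distrib_left)
  also have "\<dots> \<le> ?e * (ennreal (\<tau> k) * 1) + (\<Sum>i<n. ?e * R i k)"
    by (intro add_right_mono mult_left_mono q_int_sum_le1) auto
  also have "\<dots> \<le> ennreal (\<tau> k) * ennreal (1 - (\<Prod>j<n. 1 - a j k)) +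
      (\<Sum>i<n. \<integral>\<^sup>+t. R i k * ennreal (\<Prod>j\<in>{..<n} - {i}. 1 - t * a j k) \<partial>unif01)"
    using B by (intro add_mono sum_mono A) auto
  finally show ?thesis .
qed

lemma final_all:
  assumes good: "\<And>k. k < m \<Longrightarrow> exp (-1) \<le> (\<Prod>j<n. 1 - a j k) \<and> (\<tau> k = 0 \<or> (\<Prod>j<n. 1 - a j k) \<le> exp (-1))"
  shows "ennreal (1 - exp (-1)) * (\<integral>\<^sup>+V. ennreal (OPT M V) \<partial>P)
    \<le> (\<integral>\<^sup>+ V. (\<integral>\<^sup>+ T. (\<integral>\<^sup>+ U. (\<integral>\<^sup>+ W.
          ennreal (alg_welfare n m D M \<tau> \<theta> V T U W) \<partial>unif_vec n) \<partial>unif_vec n) \<partial>unif_vec n) \<partial>P)"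
proof -
  have "ennreal (1 - exp (-1)) * (\<integral>\<^sup>+V. ennreal (OPT M V) \<partial>P)
      \<le> ennreal (1 - exp (-1)) * (\<Sum>k<m. \<Sum>i<n. \<integral>\<^sup>+y. ennreal (y k) * ennreal (q i y k) \<partial>D i)"
    by (intro mult_left_mono OPT_le) auto
  also have "\<dots> = (\<Sum>k<m. ennreal (1 - exp (-1)) * (\<Sum>i<n. \<integral>\<^sup>+y. ennreal (y k) * ennreal (q i y k) \<partial>D i))"
    by (rule sum_distrib_left)
  also have "\<dots> \<le> (\<Sum>k<m. ennreal (\<tau> k) * ennreal (1 - (\<Prod>j<n. 1 - a j k)) +
      (\<Sum>i<n. \<integral>\<^sup>+t. R i k * ennreal (\<Prod>j\<in>{..<n} - {i}. 1 - t * a j k) \<partial>unif01))"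
    by (intro sum_mono final_k) (use good in auto)
  also have "\<dots> = (\<Sum>k<m. ennreal (\<tau> k) * ennreal (1 - (\<Prod>j<n. 1 - a j k))) +
      (\<Sum>k<m. \<Sum>i<n. \<integral>\<^sup>+t. R i k * ennreal (\<Prod>j\<in>{..<n} - {i}. 1 - t * a j k) \<partial>unif01)"
    by (rule sum.distrib)
  finally show ?thesis using main_lb by (rule order_trans)
qed

end

lemma choose_threshold:
  fixes A B :: "nat \<Rightarrow> real \<Rightarrow> real"
  assumes bnd: "\<And>j y. j < n \<Longrightarrow> 0 \<le> A j y \<and> A j y \<le> B j y \<and> B j y \<le> 1"
    and monoA: "\<And>j y y'. j < n \<Longrightarrow> y \<le> y' \<Longrightarrow> A j y' \<le> A j y"
    and rc: "\<And>j y. j < n \<Longrightarrow> (\<lambda>N. A j (y + 1 / (real N + 1))) \<longlonglongrightarrow> A j y"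
    and lc: "\<And>j y. j < n \<Longrightarrow> (\<lambda>N. A j (y - 1 / (real N + 1))) \<longlonglongrightarrow> B j y"
    and inf: "\<And>j. j < n \<Longrightarrow> (\<lambda>N. A j (real N)) \<longlonglongrightarrow> 0"
  shows "\<exists>y th. 0 \<le> y \<and> 0 \<le> th \<and> th \<le> 1 \<and>
     exp (-1) \<le> (\<Prod>j<n. 1 - (A j y + th * (B j y - A j y))) \<and>
     (y = 0 \<or> (\<Prod>j<n. 1 - (A j y + th * (B j y - A j y))) \<le> exp (-1))"
proof -
  define F where "F y = (\<Prod>j<n. 1 - A j y)" for y
  define G where "G y = (\<Prod>j<n. 1 - B j y)" for y
  define H where "H y th = (\<Prod>j<n. 1 - (A j y + th * (B j y - A j y)))" for y th
  have H0: "H y 0 = F y" and H1: "H y 1 = G y" for y unfolding H_def F_def G_def by simp_all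
  have Fmono: "F y \<le> F y'" if "y \<le> y'" for y y'
  proof (unfold F_def, intro prod_mono conjI)
    fix j assume "j \<in> {..<n}"
    then have j: "j < n" by simp
    show "0 \<le> 1 - A j y" using bnd[OF j, of y] by simp
    show "1 - A j y \<le> 1 - A j y'" using monoA[OF j that] by simp
  qed
  have Flim_r: "(\<lambda>N. F (y + 1 / (real N + 1))) \<longlonglongrightarrow> F y" for y
    unfolding F_def by (intro tendsto_prod tendsto_diff tendsto_const rc) auto
  have Flim_l: "(\<lambda>N. F (y - 1 / (real N + 1))) \<longlonglongrightarrow> G y" for y
    unfolding F_def G_def by (intro tendsto_prod tendsto_diff tendsto_const lc) auto
  have Flim_inf: "(\<lambda>N. F (real N)) \<longlonglongrightarrow> 1"
  proof -
    have "(\<lambda>N. F (real N)) \<longlonglongrightarrow> (\<Prod>j<n. 1 - 0)"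
      unfolding F_def by (intro tendsto_prod tendsto_diff tendsto_const inf) auto
    then show ?thesis by simp
  qed
  have e1: "exp (-1::real) < 1" by simp
  show ?thesis
  proof (cases "exp (-1) \<le> G 0")
    case True
    show ?thesis
      by (rule exI[of _ 0], rule exI[of _ 1]) (use True in \<open>simp add: G_def\<close>)
  next
    case False
    define S where "S = {y. 0 \<le> y \<and> exp (-1) \<le> F y}"
    have "eventually (\<lambda>N. exp (-1) < F (real N)) sequentially"
      by (rule order_tendstoD(1)[OF Flim_inf e1])
    then obtain N0 where "\<forall>N\<ge>N0. exp (-1) < F (real N)" unfolding eventually_sequentially by blast
    then have N0: "exp (-1) \<le> F (real N0)" by (simp add: less_imp_le)
    have "real N0 \<in> S" using N0 unfolding S_def by simp
    then have Sne: "S \<noteq> {}" by blast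
    have Sbdd: "bdd_below S" unfolding S_def by (rule bdd_belowI[of _ 0]) auto
    define y0 where "y0 = Inf S"
    have y0nn: "0 \<le> y0" unfolding y0_def by (rule cInf_greatest[OF Sne]) (auto simp: S_def)
    have Fy0: "exp (-1) \<le> F y0"
    proof (rule LIMSEQ_le_const[OF Flim_r], intro exI allI impI)
      fix N :: nat
      have "Inf S < y0 + 1 / (real N + 1)" unfolding y0_def by simp
      then obtain s where s: "s \<in> S" "s < y0 + 1 / (real N + 1)"
        using cInf_less_iff[OF Sne Sbdd] by blast
      have "F s \<le> F (y0 + 1 / (real N + 1))" using s(2) by (intro Fmono) simp
      moreover have "exp (-1) \<le> F s" using s(1) unfolding S_def by simp
      ultimately show "exp (-1) \<le> F (y0 + 1 / (real N + 1))" by linarith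
    qed
    have Gy0: "G y0 \<le> exp (-1)"
    proof (cases "y0 = 0")
      case True then show ?thesis using False by simp
    next
      case y0pos: False
      then have "0 < y0" using y0nn by simp
      then obtain N1 where N1: "inverse (real (Suc N1)) < y0" using reals_Archimedean by blast
      show ?thesis
      proof (rule LIMSEQ_le_const2[OF Flim_l], intro exI allI impI)
        fix N assume N: "N1 \<le> N"
        have "1 / (real N + 1) \<le> inverse (real (Suc N1))"
          using N by (simp add: divide_simps)
        then have pos: "0 \<le> y0 - 1 / (real N + 1)" using N1 by simp
        have "y0 - 1 / (real N + 1) \<notin> S"
        proof
          assume "y0 - 1 / (real N + 1) \<in> S"
          then have "y0 \<le> y0 - 1 / (real N + 1)" unfolding y0_def by (rule cInf_lower[OF _ Sbdd])
          then show False by simp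
        qed
        then show "F (y0 - 1 / (real N + 1)) \<le> exp (-1)" using pos unfolding S_def by auto
      qed
    qed
    have cont: "continuous_on {0..1} (H y0)"
      unfolding H_def by (intro continuous_intros)
    obtain th where th: "0 \<le> th" "th \<le> 1" "H y0 th = exp (-1)"
      using IVT2'[of "H y0" 1 "exp (-1)" 0, OF _ _ _ cont] Fy0 Gy0 H0 H1 by auto
    show ?thesis
      by (rule exI[of _ y0], rule exI[of _ th]) (use th y0nn in \<open>simp add: H_def\<close>)
  qed
qed


lemma ev_small: assumes "0 < (d::real)" shows "eventually (\<lambda>N. 1 / (real N + 1) < d) sequentially"
proof -
  obtain N1 where N1: "inverse (real (Suc N1)) < d" using reals_Archimedean[OF assms] by blast
  show ?thesis unfolding eventually_sequentially
  proof (intro exI allI impI)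
    fix N assume "N1 \<le> N"
    then have "1 / (real N + 1) \<le> inverse (real (Suc N1))" by (simp add: divide_simps)
    then show "1 / (real N + 1) < d" using N1 by simp
  qed
qed

lemma lim_r: "(\<lambda>N. if y + 1 / (real N + 1) < x then 1 else (0::real)) \<longlonglongrightarrow> (if y < x then 1 else 0)"
proof (cases "y < x")
  case True
  have "eventually (\<lambda>N. (if y + 1 / (real N + 1) < x then 1 else (0::real)) = 1) sequentially"
    using ev_small[of "x - y"] True by (auto elim: eventually_mono)
  then show ?thesis using True by (simp add: tendsto_eventually)
next
  case False
  have "(if y + 1 / (real N + 1) < x then 1 else (0::real)) = 0" for N
    using False by (auto simp: add_pos_pos) (smt (verit) divide_nonneg_nonneg of_nat_0_le_iff)
  then show ?thesis using False by simp
qed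

lemma lim_l: "(\<lambda>N. if y - 1 / (real N + 1) < x then 1 else (0::real)) \<longlonglongrightarrow> (if y \<le> x then 1 else 0)"
proof (cases "y \<le> x")
  case False
  have "eventually (\<lambda>N. (if y - 1 / (real N + 1) < x then 1 else (0::real)) = 0) sequentially"
    using ev_small[of "y - x"] False by (auto elim: eventually_mono)
  then show ?thesis using False by (simp add: tendsto_eventually)
next
  case True
  have "(if y - 1 / (real N + 1) < x then 1 else (0::real)) = 1" for N
    using True by (smt (verit) divide_pos_pos of_nat_0_le_iff)
  then show ?thesis using True by simp
qed

lemma lim_inf: "(\<lambda>N. if real N < x then 1 else (0::real)) \<longlonglongrightarrow> 0"
proof -
  obtain N1 :: nat where "x \<le> real N1" using real_arch_simple by blast
  then have "eventually (\<lambda>N. (if real N < x then 1 else (0::real)) = 0) sequentially"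
    unfolding eventually_sequentially by (intro exI[of _ N1]) auto
  then show ?thesis by (simp add: tendsto_eventually)
qed

context S6 begin

definition Ar :: "nat \<Rightarrow> nat \<Rightarrow> real \<Rightarrow> real" where
  "Ar j k y = integral\<^sup>L (D j) (\<lambda>v. q j v k * (if y < v k then 1 else 0))"

definition Br :: "nat \<Rightarrow> nat \<Rightarrow> real \<Rightarrow> real" where
  "Br j k y = integral\<^sup>L (D j) (\<lambda>v. q j v k * (if y \<le> v k then 1 else 0))"

lemma comp_meas_D': "j < n \<Longrightarrow> k < m \<Longrightarrow> (\<lambda>v. v k) \<in> borel_measurable (D j)"
  using comp_meas by (simp add: measurable_cong_sets[OF D_sets refl])

lemma ind_int:
  assumes j: "j < n" and k: "k < m" and g: "g \<in> borel_measurable borel" and g01: "\<And>x. 0 \<le> g x \<and> g x \<le> 1"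
  shows "integrable (D j) (\<lambda>v. q j v k * g (v k))"
proof -
  interpret prob_space "D j" by (rule D_prob[OF j])
  have m: "(\<lambda>v. q j v k * g (v k)) \<in> borel_measurable (D j)"
    using q_meas[OF j, of k] comp_meas_D'[OF j k] g by measurable
  show ?thesis
  proof (rule integrable_const_bound[where B=1, OF _ m], intro AE_I2)
    fix v show "norm (q j v k * g (v k)) \<le> 1"
      using q_nonneg[of j v k] q_le1[of j v k] g01[of "v k"] by (simp add: abs_mult mult_le_one)
  qed
qed

lemma dct_q:
  assumes j: "j < n" and k: "k < m"
    and gN: "\<And>N. gs N \<in> borel_measurable borel" "\<And>N x. 0 \<le> gs N x \<and> gs N x \<le> 1"
    and g: "g \<in> borel_measurable borel"
    and lim: "\<And>x. (\<lambda>N. gs N x) \<longlonglongrightarrow> g x"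
  shows "(\<lambda>N. integral\<^sup>L (D j) (\<lambda>v. q j v k * gs N (v k))) \<longlonglongrightarrow> integral\<^sup>L (D j) (\<lambda>v. q j v k * g (v k))"
proof -
  interpret prob_space "D j" by (rule D_prob[OF j])
  show ?thesis
  proof (rule integral_dominated_convergence[where w="\<lambda>_. 1"])
    show "(\<lambda>v. q j v k * g (v k)) \<in> borel_measurable (D j)"
      using q_meas[OF j, of k] comp_meas_D'[OF j k] g by measurable
    fix N
    show "(\<lambda>v. q j v k * gs N (v k)) \<in> borel_measurable (D j)"
      using q_meas[OF j, of k] comp_meas_D'[OF j k] gN(1)[of N] by measurable
    show "AE v in D j. norm (q j v k * gs N (v k)) \<le> 1"
      using q_nonneg q_le1 gN(2) by (intro AE_I2) (simp add: abs_mult mult_le_one)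
  next
    show "integrable (D j) (\<lambda>_. 1::real)" by simp
    show "AE v in D j. (\<lambda>N. q j v k * gs N (v k)) \<longlonglongrightarrow> q j v k * g (v k)"
      by (intro AE_I2 tendsto_mult tendsto_const lim)
  qed
qed

lemma Ar_bnd: assumes j: "j < n" and k: "k < m"
  shows "0 \<le> Ar j k y \<and> Ar j k y \<le> Br j k y \<and> Br j k y \<le> 1"
proof -
  interpret prob_space "D j" by (rule D_prob[OF j])
  have i1: "integrable (D j) (\<lambda>v. q j v k * (if y < v k then 1 else 0))"
    by (rule ind_int[OF j k, of "\<lambda>x. if y < x then 1 else 0"]) auto
  have i2: "integrable (D j) (\<lambda>v. q j v k * (if y \<le> v k then 1 else 0))"
    by (rule ind_int[OF j k, of "\<lambda>x. if y \<le> x then 1 else 0"]) auto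
  have "0 \<le> Ar j k y" unfolding Ar_def by (intro integral_nonneg_AE AE_I2) (simp add: q_nonneg)
  moreover have "Ar j k y \<le> Br j k y" unfolding Ar_def Br_def
    by (rule integral_mono[OF i1 i2]) (simp add: q_nonneg)
  moreover have "Br j k y \<le> integral\<^sup>L (D j) (\<lambda>_. 1)" unfolding Br_def
    by (rule integral_mono[OF i2]) (auto simp: q_le1)
  ultimately show ?thesis by (simp add: prob_space)
qed

lemma Ar_mono: assumes j: "j < n" and k: "k < m" and yy: "y \<le> y'" shows "Ar j k y' \<le> Ar j k y"
  unfolding Ar_def
  by (rule integral_mono[OF ind_int[OF j k] ind_int[OF j k]]) (use yy in \<open>auto simp: q_nonneg\<close>)

lemma Ar_rc: assumes j: "j < n" and k: "k < m" shows "(\<lambda>N. Ar j k (y + 1 / (real N + 1))) \<longlonglongrightarrow> Ar j k y"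
  unfolding Ar_def
proof (rule dct_q[OF j k, where gs="\<lambda>N x. if y + 1 / (real N + 1) < x then 1 else 0" and g="\<lambda>x. if y < x then 1 else 0"])
  fix N show "(\<lambda>x. if y + 1 / (real N + 1) < x then 1 else (0::real)) \<in> borel_measurable borel" by measurable
  fix x show "0 \<le> (if y + 1 / (real N + 1) < x then 1 else (0::real)) \<and> (if y + 1 / (real N + 1) < x then 1 else (0::real)) \<le> 1" by simp
next
  show "(\<lambda>x. if y < x then 1 else (0::real)) \<in> borel_measurable borel" by measurable
next
  fix x show "(\<lambda>N. if y + 1 / (real N + 1) < x then 1 else (0::real)) \<longlonglongrightarrow> (if y < x then 1 else 0)" by (rule lim_r)
qed

lemma Ar_lc: assumes j: "j < n" and k: "k < m" shows "(\<lambda>N. Ar j k (y - 1 / (real N + 1))) \<longlonglongrightarrow> Br j k y"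
  unfolding Ar_def Br_def
proof (rule dct_q[OF j k, where gs="\<lambda>N x. if y - 1 / (real N + 1) < x then 1 else 0" and g="\<lambda>x. if y \<le> x then 1 else 0"])
  fix N show "(\<lambda>x. if y - 1 / (real N + 1) < x then 1 else (0::real)) \<in> borel_measurable borel" by measurable
  fix x show "0 \<le> (if y - 1 / (real N + 1) < x then 1 else (0::real)) \<and> (if y - 1 / (real N + 1) < x then 1 else (0::real)) \<le> 1" by simp
next
  show "(\<lambda>x. if y \<le> x then 1 else (0::real)) \<in> borel_measurable borel" by measurable
next
  fix x show "(\<lambda>N. if y - 1 / (real N + 1) < x then 1 else (0::real)) \<longlonglongrightarrow> (if y \<le> x then 1 else 0)" by (rule lim_l)
qed

lemma Ar_inf: assumes j: "j < n" and k: "k < m" shows "(\<lambda>N. Ar j k (real N)) \<longlonglongrightarrow> 0"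
proof -
  have "(\<lambda>N. Ar j k (real N)) \<longlonglongrightarrow> integral\<^sup>L (D j) (\<lambda>v. q j v k * (\<lambda>_. 0) (v k))"
    unfolding Ar_def
  proof (rule dct_q[OF j k, where gs="\<lambda>N x. if real N < x then 1 else 0" and g="\<lambda>_. 0"])
    fix N show "(\<lambda>x. if real N < x then 1 else (0::real)) \<in> borel_measurable borel" by measurable
    fix x show "0 \<le> (if real N < x then 1 else (0::real)) \<and> (if real N < x then 1 else (0::real)) \<le> 1" by simp
  next
    show "(\<lambda>x. 0::real) \<in> borel_measurable borel" by simp
  next
    fix x show "(\<lambda>N. if real N < x then 1 else (0::real)) \<longlonglongrightarrow> 0" by (rule lim_inf)
  qed
  then show ?thesis by simp
qed

lemma exists_good:
  "\<exists>\<tau> \<theta>. (\<forall>k. 0 \<le> \<tau> k \<and> 0 \<le> \<theta> k \<and> \<theta> k \<le> 1) \<and>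
     (\<forall>k<m. exp (-1) \<le> (\<Prod>j<n. 1 - (Ar j k (\<tau> k) + \<theta> k * (Br j k (\<tau> k) - Ar j k (\<tau> k)))) \<and>
        (\<tau> k = 0 \<or> (\<Prod>j<n. 1 - (Ar j k (\<tau> k) + \<theta> k * (Br j k (\<tau> k) - Ar j k (\<tau> k)))) \<le> exp (-1)))"
proof -
  have ex: "\<forall>k. \<exists>p::real \<times> real. k < m \<longrightarrow> (0 \<le> fst p \<and> 0 \<le> snd p \<and> snd p \<le> 1 \<and>
     exp (-1) \<le> (\<Prod>j<n. 1 - (Ar j k (fst p) + snd p * (Br j k (fst p) - Ar j k (fst p)))) \<and>
     (fst p = 0 \<or> (\<Prod>j<n. 1 - (Ar j k (fst p) + snd p * (Br j k (fst p) - Ar j k (fst p)))) \<le> exp (-1)))"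
  proof
    fix k
    show "\<exists>p::real \<times> real. k < m \<longrightarrow> (0 \<le> fst p \<and> 0 \<le> snd p \<and> snd p \<le> 1 \<and>
     exp (-1) \<le> (\<Prod>j<n. 1 - (Ar j k (fst p) + snd p * (Br j k (fst p) - Ar j k (fst p)))) \<and>
     (fst p = 0 \<or> (\<Prod>j<n. 1 - (Ar j k (fst p) + snd p * (Br j k (fst p) - Ar j k (fst p)))) \<le> exp (-1)))"
    proof (cases "k < m")
      case True
      obtain y th where "0 \<le> y \<and> 0 \<le> th \<and> th \<le> 1 \<and>
          exp (-1) \<le> (\<Prod>j<n. 1 - (Ar j k y + th * (Br j k y - Ar j k y))) \<and>
          (y = 0 \<or> (\<Prod>j<n. 1 - (Ar j k y + th * (Br j k y - Ar j k y))) \<le> exp (-1))"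
      proof -
        have "\<exists>y th. 0 \<le> y \<and> 0 \<le> th \<and> th \<le> 1 \<and>
          exp (-1) \<le> (\<Prod>j<n. 1 - (Ar j k y + th * (Br j k y - Ar j k y))) \<and>
          (y = 0 \<or> (\<Prod>j<n. 1 - (Ar j k y + th * (Br j k y - Ar j k y))) \<le> exp (-1))"
          apply (rule choose_threshold[of n "\<lambda>j. Ar j k" "\<lambda>j. Br j k"])
          apply (erule Ar_bnd[OF _ True])
          apply (erule Ar_mono[OF _ True], assumption)
          apply (erule Ar_rc[OF _ True])
          apply (erule Ar_lc[OF _ True])
          apply (erule Ar_inf[OF _ True])
          done
        then show ?thesis using that by blast
      qed
      then show ?thesis by (intro exI[of _ "(y, th)"]) simp
    qed simp
  qed
  obtain p where p: "\<And>k. k < m \<Longrightarrow> 0 \<le> fst (p k) \<and> 0 \<le> snd (p k) \<and> snd (p k) \<le> 1 \<and>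
     exp (-1) \<le> (\<Prod>j<n. 1 - (Ar j k (fst (p k)) + snd (p k) * (Br j k (fst (p k)) - Ar j k (fst (p k))))) \<and>
     (fst (p k) = 0 \<or> (\<Prod>j<n. 1 - (Ar j k (fst (p k)) + snd (p k) * (Br j k (fst (p k)) - Ar j k (fst (p k))))) \<le> exp (-1))"
    using choice[OF ex] by blast
  show ?thesis
    by (rule exI[of _ "\<lambda>k. if k < m then fst (p k) else 0"], rule exI[of _ "\<lambda>k. if k < m then snd (p k) else 0"])
       (use p in auto)
qed

end

context S6t begin

lemma a_eq: assumes j: "j < n" and k: "k < m"
  shows "a j k = Ar j k (\<tau> k) + \<theta> k * (Br j k (\<tau> k) - Ar j k (\<tau> k))"
proof -
  have i1: "integrable (D j) (\<lambda>v. q j v k * (if \<tau> k < v k then 1 else 0))"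
    by (rule ind_int[OF j k]) auto
  have i2: "integrable (D j) (\<lambda>v. q j v k * (if \<tau> k \<le> v k then 1 else 0))"
    by (rule ind_int[OF j k]) auto
  have pw: "\<alpha> j k v = q j v k * (if \<tau> k < v k then 1 else 0) +
      \<theta> k * (q j v k * (if \<tau> k \<le> v k then 1 else 0) - q j v k * (if \<tau> k < v k then 1 else 0))" for v
    unfolding \<alpha>_def \<phi>_def by (auto simp: algebra_simps)
  have "a j k = integral\<^sup>L (D j) (\<lambda>v. q j v k * (if \<tau> k < v k then 1 else 0) +
      \<theta> k * (q j v k * (if \<tau> k \<le> v k then 1 else 0) - q j v k * (if \<tau> k < v k then 1 else 0)))"
    unfolding a_def pw ..
  also have "\<dots> = Ar j k (\<tau> k) + \<theta> k * (Br j k (\<tau> k) - Ar j k (\<tau> k))"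
  proof -
    have i3: "integrable (D j) (\<lambda>v. q j v k * (if \<tau> k \<le> v k then 1 else 0) - q j v k * (if \<tau> k < v k then 1 else 0))"
      by (rule Bochner_Integration.integrable_diff[OF i2 i1])
    have "integral\<^sup>L (D j) (\<lambda>v. q j v k * (if \<tau> k < v k then 1 else 0) +
      \<theta> k * (q j v k * (if \<tau> k \<le> v k then 1 else 0) - q j v k * (if \<tau> k < v k then 1 else 0)))
      = integral\<^sup>L (D j) (\<lambda>v. q j v k * (if \<tau> k < v k then 1 else 0)) +
        integral\<^sup>L (D j) (\<lambda>v. \<theta> k * (q j v k * (if \<tau> k \<le> v k then 1 else 0) - q j v k * (if \<tau> k < v k then 1 else 0)))"
      by (rule Bochner_Integration.integral_add[OF i1]) (rule integrable_mult_right[OF i3])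
    also have "integral\<^sup>L (D j) (\<lambda>v. \<theta> k * (q j v k * (if \<tau> k \<le> v k then 1 else 0) - q j v k * (if \<tau> k < v k then 1 else 0)))
       = \<theta> k * (integral\<^sup>L (D j) (\<lambda>v. q j v k * (if \<tau> k \<le> v k then 1 else 0)) - integral\<^sup>L (D j) (\<lambda>v. q j v k * (if \<tau> k < v k then 1 else 0)))"
      by (simp only: integral_mult_right_zero Bochner_Integration.integral_diff[OF i2 i1])
    finally show ?thesis unfolding Ar_def Br_def .
  qed
  finally show ?thesis .
qed

end

theorem theorem6:
  fixes n m :: nat
    and D :: "nat \<Rightarrow> (nat \<Rightarrow> real) measure"
    and M :: "(nat \<Rightarrow> nat \<Rightarrow> real) \<Rightarrow> (nat \<times> nat) set"
  assumes D_prob: "\<And>i. i < n \<Longrightarrow> prob_space (D i)"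
    and D_sets: "\<And>i. i < n \<Longrightarrow> sets (D i) = sets (value_space m)"
    and D_nonneg: "\<And>i. i < n \<Longrightarrow> (AE x in D i. \<forall>k<m. 0 \<le> x k)"
    and M_max: "\<And>V. is_max_weight_matching n m V (M V)"
    and M_meas: "\<And>i k. {V \<in> space (profile_space n m). (i, k) \<in> M V} \<in> sets (profile_space n m)"
  shows "\<exists>\<tau> \<theta> :: nat \<Rightarrow> real.
           (\<forall>k<m. 0 \<le> \<tau> k \<and> 0 \<le> \<theta> k \<and> \<theta> k \<le> 1) \<and>
           (\<integral>\<^sup>+ V. (\<integral>\<^sup>+ T. (\<integral>\<^sup>+ U. (\<integral>\<^sup>+ W.
                 ennreal (alg_welfare n m D M \<tau> \<theta> V T U W) \<partial>unif_vec n) \<partial>unif_vec n) \<partial>unif_vec n)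
              \<partial>(\<Pi>\<^sub>M i\<in>{..<n}. D i))
           \<ge> ennreal (1 - exp (-1)) * (\<integral>\<^sup>+ V. ennreal (OPT M V) \<partial>(\<Pi>\<^sub>M i\<in>{..<n}. D i))"
proof -
  interpret S6 n m D M
    by (rule S6.intro[OF D_prob D_sets D_nonneg M_max M_meas])
  obtain \<tau> \<theta> :: "nat \<Rightarrow> real" where tt: "\<forall>k. 0 \<le> \<tau> k \<and> 0 \<le> \<theta> k \<and> \<theta> k \<le> 1"
    and good: "\<forall>k<m. exp (-1) \<le> (\<Prod>j<n. 1 - (Ar j k (\<tau> k) + \<theta> k * (Br j k (\<tau> k) - Ar j k (\<tau> k)))) \<and>
        (\<tau> k = 0 \<or> (\<Prod>j<n. 1 - (Ar j k (\<tau> k) + \<theta> k * (Br j k (\<tau> k) - Ar j k (\<tau> k)))) \<le> exp (-1))"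
    using exists_good by blast
  interpret S: S6t n m D M \<tau> \<theta>
    by unfold_locales (use tt in auto)
  have peq: "(\<Prod>j<n. 1 - S.a j k) = (\<Prod>j<n. 1 - (Ar j k (\<tau> k) + \<theta> k * (Br j k (\<tau> k) - Ar j k (\<tau> k))))"
    if k: "k < m" for k
    by (intro prod.cong refl) (simp add: S.a_eq[OF _ k])
  have main: "ennreal (1 - exp (-1)) * (\<integral>\<^sup>+V. ennreal (OPT M V) \<partial>P)
    \<le> (\<integral>\<^sup>+ V. (\<integral>\<^sup>+ T. (\<integral>\<^sup>+ U. (\<integral>\<^sup>+ W.
          ennreal (alg_welfare n m D M \<tau> \<theta> V T U W) \<partial>unif_vec n) \<partial>unif_vec n) \<partial>unif_vec n) \<partial>P)"
  proof (rule S.final_all)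
    fix k assume k: "k < m"
    show "exp (-1) \<le> (\<Prod>j<n. 1 - S.a j k) \<and> (\<tau> k = 0 \<or> (\<Prod>j<n. 1 - S.a j k) \<le> exp (-1))"
      unfolding peq[OF k] using good k by blast
  qed
  show ?thesis
    by (rule exI[of _ \<tau>], rule exI[of _ \<theta>]) (use tt main in auto)
qed

end
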